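(* Let $p$ be a solution of $\mathcal E^{\gamma,\delta}_{k,\ell}$ on an open connected set $O$, and suppose that either $k=1$ or $p_{u^{(k-1)}}p_{xu^{(k-2)}}-p_{u^{(k-2)}}p_{xu^{(k-1)}}$ vanishes identically. Then around each point where $p_{u^{(k-1)}}\ne0$ there exist a neighborhood and a function $\alpha$ of two variables such that $p_x=\alpha(x,p)$ identically on that neighborhood.
   Context: $k,\ell$ positive integers, $\widetilde\Omega\subset\mathbb{R}^4$ open connected, $\gamma,\delta:\widetilde\Omega\to\mathbb{R}$ real analytic with $\gamma_4$ nowhere zero (numeric subscripts = partial derivatives in that argument). The unknown $p$ is a function of $u,\dot u,\dots,u^{(k-1)},x,v,\dots,v^{(\ell-1)}$; $F=\sum_{i=0}^{k-2}u^{(i+1)}\partial_{u^{(i)}}+\sum_{i=0}^{\ell-2}v^{(i+1)}\partial_{v^{(i)}}$. A solution of $\mathcal E^{\gamma,\delta}_{k,\ell}$ is a real analytic $p$ with $(x,p,p_x,p_{xx})$ taking values in $\widetilde\Omega$ satisfying: (a) $p_{u^{(k-1)}}(Fp_x-\delta(x,p,p_x,p_{xx}))-p_{xu^{(k-1)}}(Fp-\gamma(x,p,p_x,p_{xx}))=0$; (b) $p_{u^{(k-1)}}p_{xv^{(\ell-1)}}-p_{xu^{(k-1)}}p_{v^{(\ell-1)}}=0$; (c) $p_{u^{(k-1)}}\ne0$; (d) $p_{v^{(\ell-1)}}\ne0$; (e) $\gamma_1+\gamma_2p_x+\gamma_3p_{xx}+\gamma_4p_{xxx}-\delta\ne0$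 (at $(x,p,p_x,p_{xx})$). *)

theory Defs
  imports "HOL-Analysis.Analysis"
begin

text \<open>Points of R^N are encoded as functions nat => real vanishing at indices >= N.
  The topology is the subspace topology of the product topology, i.e. the Euclidean one.\<close>
definition EucSp :: "nat \<Rightarrow> (nat \<Rightarrow> real) set" where
  "EucSp N = {z. \<forall>i\<ge>N. z i = 0}"

definition pd :: "nat \<Rightarrow> ((nat \<Rightarrow> real) \<Rightarrow> real) \<Rightarrow> (nat \<Rightarrow> real) \<Rightarrow> real" where
  "pd i f z = deriv (\<lambda>t. f (z(i := t))) (z i)"

text \<open>Real analyticity in N variables: locally the sum of an (absolutely, i.e. unconditionally)
  convergent power series on a polydisc.\<close>
definition real_analytic_on :: "nat \<Rightarrow> ((nat \<Rightarrow> real) \<Rightarrow> real) \<Rightarrow> (nat \<Rightarrow> real) set \<Rightarrow> bool" where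
  "real_analytic_on N f D \<longleftrightarrow>
     (\<forall>z\<in>D. \<exists>r>0. \<exists>c :: (nat \<Rightarrow> nat) \<Rightarrow> real.
        \<forall>w\<in>EucSp N. (\<forall>i<N. \<bar>w i - z i\<bar> < r) \<longrightarrow>
          ((\<lambda>a. c a * (\<Prod>i<N. (w i - z i) ^ a i)) has_sum f w) {a. \<forall>i\<ge>N. a i = 0})"

definition mk4 :: "real \<Rightarrow> real \<Rightarrow> real \<Rightarrow> real \<Rightarrow> (nat \<Rightarrow> real)" where
  "mk4 a b c d = (\<lambda>i. if i = 0 then a else if i = 1 then b else if i = 2 then c
                     else if i = 3 then d else 0)"

text \<open>Coordinates of R^(k+l+1): index i<k is u^(i), index k is x, index k+1+j is v^(j).
  The total derivative operator F.\<close>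
definition Fop :: "nat \<Rightarrow> nat \<Rightarrow> ((nat \<Rightarrow> real) \<Rightarrow> real) \<Rightarrow> (nat \<Rightarrow> real) \<Rightarrow> real" where
  "Fop k l f z = (\<Sum>i<k - 1. z (i + 1) * pd i f z) + (\<Sum>j<l - 1. z (k + 2 + j) * pd (k + 1 + j) f z)"

definition is_solution ::
  "nat \<Rightarrow> nat \<Rightarrow> ((nat \<Rightarrow> real) \<Rightarrow> real) \<Rightarrow> ((nat \<Rightarrow> real) \<Rightarrow> real) \<Rightarrow> (nat \<Rightarrow> real) set
   \<Rightarrow> ((nat \<Rightarrow> real) \<Rightarrow> real) \<Rightarrow> (nat \<Rightarrow> real) set \<Rightarrow> bool" where
  "is_solution k l \<gamma> \<delta> \<Omega> p D \<longleftrightarrow>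
     real_analytic_on (k + l + 1) p D \<and>
     (\<forall>z\<in>D.
        let w = mk4 (z k) (p z) (pd k p z) (pd k (pd k p) z) in
        w \<in> \<Omega> \<and>
        pd (k - 1) p z * (Fop k l (pd k p) z - \<delta> w)
          - pd (k - 1) (pd k p) z * (Fop k l p z - \<gamma> w) = 0 \<and>
        pd (k - 1) p z * pd (k + l) (pd k p) z - pd (k - 1) (pd k p) z * pd (k + l) p z = 0 \<and>
        pd (k - 1) p z \<noteq> 0 \<and>
        pd (k + l) p z \<noteq> 0 \<and>
        pd 0 \<gamma> w + pd 1 \<gamma> w * pd k p z + pd 2 \<gamma> w * pd k (pd k p) z
          + pd 3 \<gamma> w * pd k (pd k (pd k p)) z - \<delta> w \<noteq> 0)"

end

theory Submission
  imports Defs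
begin

definition Idx :: "nat \<Rightarrow> (nat \<Rightarrow> nat) set" where "Idx N = {a. \<forall>i\<ge>N. a i = 0}"
definition mon :: "nat \<Rightarrow> (nat \<Rightarrow> real) \<Rightarrow> (nat \<Rightarrow> nat) \<Rightarrow> real" where
  "mon N h a = (\<Prod>i<N. h i ^ a i)"
definition deg :: "nat \<Rightarrow> (nat \<Rightarrow> nat) \<Rightarrow> nat" where "deg N a = (\<Sum>i<N. a i)"

lemma mon_bound:
  assumes "\<forall>i<N. \<bar>h i\<bar> \<le> \<delta>"
  shows "\<bar>mon N h a\<bar> \<le> \<delta> ^ deg N a"
proof -
  have "\<bar>mon N h a\<bar> = (\<Prod>i<N. \<bar>h i\<bar> ^ a i)" unfolding mon_def by (simp add: abs_prod power_abs)
  also have "\<dots> \<le> (\<Prod>i<N. \<delta> ^ a i)"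
    by (rule prod_mono) (use assms in \<open>auto intro: power_mono\<close>)
  also have "\<dots> = \<delta> ^ deg N a" unfolding deg_def by (simp add: power_sum)
  finally show ?thesis .
qed

lemma tail_bound:
  fixes c :: "(nat \<Rightarrow> nat) \<Rightarrow> real"
  assumes S: "(\<lambda>a. c a * \<rho> ^ deg N a) summable_on Idx N" and "0 < \<rho>" "0 \<le> \<delta>" "\<delta> \<le> \<rho>"
    and hb: "\<forall>i<N. \<bar>h i\<bar> \<le> \<delta>" and A: "A \<subseteq> Idx N"
    and ad: "\<forall>a\<in>A. mon N h a = 0 \<or> d \<le> deg N a"
  shows "(\<lambda>a. c a * mon N h a) summable_on A"
    and "\<bar>infsum (\<lambda>a. c a * mon N h a) A\<bar> \<le> (\<delta>/\<rho>)^d * infsum (\<lambda>a. \<bar>c a\<bar> * \<rho> ^ deg N a) (Idx N)"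
proof -
  have pw: "\<bar>c a * mon N h a\<bar> \<le> (\<delta>/\<rho>)^d * (\<bar>c a\<bar> * \<rho> ^ deg N a)" if "a \<in> A" for a
  proof (cases "mon N h a = 0")
    case True
    have "0 \<le> (\<delta>/\<rho>)^d * (\<bar>c a\<bar> * \<rho> ^ deg N a)"
      using assms(2,3) by (intro mult_nonneg_nonneg) auto
    then show ?thesis using True by simp
  next
    case False
    with ad that have dd: "d \<le> deg N a" by auto
    have "\<bar>mon N h a\<bar> \<le> \<delta> ^ deg N a" by (rule mon_bound[OF hb])
    also have "\<dots> = (\<delta>/\<rho>) ^ deg N a * \<rho> ^ deg N a" using assms by (simp add: power_divide)
    also have "\<dots> \<le> (\<delta>/\<rho>) ^ d * \<rho> ^ deg N a"
      using assms dd by (intro mult_right_mono power_decreasing) auto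
    finally have "\<bar>c a\<bar> * \<bar>mon N h a\<bar> \<le> \<bar>c a\<bar> * ((\<delta>/\<rho>) ^ d * \<rho> ^ deg N a)"
      by (intro mult_left_mono) auto
    then show ?thesis by (simp add: abs_mult mult_ac)
  qed
  have nn: "0 \<le> (\<delta>/\<rho>)^d * (\<bar>c a\<bar> * \<rho> ^ deg N a)" for a
    using assms(2,3) by (intro mult_nonneg_nonneg) auto
  have S1: "(\<lambda>a. \<bar>c a\<bar> * \<rho> ^ deg N a) summable_on Idx N"
  proof -
    have "(\<lambda>a. norm (c a * \<rho> ^ deg N a)) summable_on Idx N"
      using summable_on_iff_abs_summable_on_real[THEN iffD1, OF S] .
    moreover have "(\<lambda>a. norm (c a * \<rho> ^ deg N a)) = (\<lambda>a. \<bar>c a\<bar> * \<rho> ^ deg N a)"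
      using assms(2) by (simp add: abs_mult)
    ultimately show ?thesis by simp
  qed
  then have S2: "(\<lambda>a. (\<delta>/\<rho>)^d * (\<bar>c a\<bar> * \<rho> ^ deg N a)) summable_on Idx N"
    by (rule summable_on_cmult_right)
  then have S3: "(\<lambda>a. (\<delta>/\<rho>)^d * (\<bar>c a\<bar> * \<rho> ^ deg N a)) summable_on A"
    using A summable_on_subset_banach by blast
  have S3a: "(\<lambda>a. norm ((\<delta>/\<rho>)^d * (\<bar>c a\<bar> * \<rho> ^ deg N a))) summable_on A"
    using summable_on_iff_abs_summable_on_real[THEN iffD1, OF S3] .
  have AS: "(\<lambda>a. norm (c a * mon N h a)) summable_on A"
    by (rule Infinite_Sum.abs_summable_on_comparison_test[OF S3a]) (use pw nn in \<open>simp\<close>)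
  show "(\<lambda>a. c a * mon N h a) summable_on A"
    using summable_on_iff_abs_summable_on_real[THEN iffD2, OF AS] .
  have "\<bar>infsum (\<lambda>a. c a * mon N h a) A\<bar> \<le> infsum (\<lambda>a. norm (c a * mon N h a)) A"
    using norm_infsum_bound[of "\<lambda>a. c a * mon N h a" A] AS by simp
  also have "\<dots> \<le> infsum (\<lambda>a. (\<delta>/\<rho>)^d * (\<bar>c a\<bar> * \<rho> ^ deg N a)) A"
    by (rule infsum_mono[OF AS S3]) (use pw in \<open>simp\<close>)
  also have "\<dots> \<le> infsum (\<lambda>a. (\<delta>/\<rho>)^d * (\<bar>c a\<bar> * \<rho> ^ deg N a)) (Idx N)"
    by (rule infsum_mono_neutral[OF S3 S2]) (use A nn in auto)
  also have "\<dots> = (\<delta>/\<rho>)^d * infsum (\<lambda>a. \<bar>c a\<bar> * \<rho> ^ deg N a) (Idx N)"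
    by (rule infsum_cmult_right[OF S1])
  finally show "\<bar>infsum (\<lambda>a. c a * mon N h a) A\<bar> \<le> (\<delta>/\<rho>)^d * infsum (\<lambda>a. \<bar>c a\<bar> * \<rho> ^ deg N a) (Idx N)" .
qed

definition ana_at :: "nat \<Rightarrow> ((nat \<Rightarrow> real) \<Rightarrow> real) \<Rightarrow> (nat \<Rightarrow> real) \<Rightarrow> real \<Rightarrow> ((nat \<Rightarrow> nat) \<Rightarrow> real) \<Rightarrow> bool" where
  "ana_at N f z r c \<longleftrightarrow> 0 < r \<and> (\<forall>w\<in>EucSp N. (\<forall>i<N. \<bar>w i - z i\<bar> < r) \<longrightarrow>
      ((\<lambda>a. c a * mon N (\<lambda>i. w i - z i) a) has_sum f w) (Idx N))"

definition unitv :: "nat \<Rightarrow> nat \<Rightarrow> nat" where "unitv m = (\<lambda>j. if j = m then 1 else 0)"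

lemma ana_of_real_analytic:
  assumes "real_analytic_on N f D" "z \<in> D"
  shows "\<exists>r c. ana_at N f z r c"
  using assms unfolding real_analytic_on_def ana_at_def mon_def Idx_def by blast

lemma has_sum_split_finite:
  fixes g :: "'a \<Rightarrow> real"
  assumes "(g has_sum S) B" "F \<subseteq> B" "finite F"
  shows "S = sum g F + infsum g (B - F)"
proof -
  have "g summable_on (B - F)" using assms(1) summable_on_subset_banach[of g B "B - F"]
    by (auto simp: has_sum_imp_summable)
  then have "(g has_sum infsum g (B - F)) (B - F)" by (simp add: summable_iff_has_sum_infsum)
  moreover have "(g has_sum sum g F) F" using assms(3) by (rule has_sum_finiteI) simp
  ultimately have "(g has_sum (sum g F + infsum g (B - F))) (F \<union> (B - F))"
    by (intro has_sum_Un_disjoint) auto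
  moreover have "F \<union> (B - F) = B" using assms(2) by auto
  ultimately show ?thesis using assms(1) has_sum_unique by metis
qed

lemma Idx_zero_iff: "a \<in> Idx N \<Longrightarrow> a = (\<lambda>_. 0) \<longleftrightarrow> (\<forall>i<N. a i = 0)"
  unfolding Idx_def by (auto simp: fun_eq_iff) (meson not_le)

lemma deg_ge: "i < N \<Longrightarrow> a i \<le> deg N a"
  unfolding deg_def by (rule member_le_sum) auto

lemma mon_zero_idx: "mon N h (\<lambda>_. 0) = 1" unfolding mon_def by simp

lemma mon_unitv: "m < N \<Longrightarrow> mon N h (unitv m) = h m"
proof -
  assume "m < N"
  have "mon N h (unitv m) = (\<Prod>i<N. if i = m then h i else 1)"
    unfolding mon_def unitv_def by (intro prod.cong) auto
  also have "\<dots> = h m" using \<open>m < N\<close> by (simp add: prod.delta)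
  finally show ?thesis .
qed

lemma unitv_Idx: "m < N \<Longrightarrow> unitv m \<in> Idx N" unfolding unitv_def Idx_def by auto

lemma ana_summable:
  assumes "ana_at N f z r c" "z \<in> EucSp N" "0 < \<rho>" "\<rho> < r"
  shows "(\<lambda>a. c a * \<rho> ^ deg N a) summable_on Idx N"
proof -
  define w where "w = (\<lambda>i. if i < N then z i + \<rho> else 0)"
  have "w \<in> EucSp N" unfolding w_def EucSp_def by auto
  moreover have "\<forall>i<N. \<bar>w i - z i\<bar> < r" using assms unfolding w_def by auto
  ultimately have hs: "((\<lambda>a. c a * mon N (\<lambda>i. w i - z i) a) has_sum f w) (Idx N)"
    using assms(1) unfolding ana_at_def by blast
  have "mon N (\<lambda>i. w i - z i) a = \<rho> ^ deg N a" for a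
  proof -
    have "mon N (\<lambda>i. w i - z i) a = (\<Prod>i<N. \<rho> ^ a i)" unfolding mon_def w_def by (intro prod.cong) auto
    also have "\<dots> = \<rho> ^ deg N a" unfolding deg_def by (simp add: power_sum)
    finally show ?thesis .
  qed
  with hs show ?thesis by (auto simp: has_sum_imp_summable)
qed

lemma ana_val:
  assumes "ana_at N f z r c" "z \<in> EucSp N"
  shows "f z = c (\<lambda>_. 0)"
proof -
  have hs: "((\<lambda>a. c a * mon N (\<lambda>i. 0) a) has_sum f z) (Idx N)"
    using assms unfolding ana_at_def by auto
  have z0: "mon N (\<lambda>i. 0) a = 0" if "a \<in> Idx N" "a \<noteq> (\<lambda>_. 0)" for a
  proof -
    from that Idx_zero_iff obtain i where "i < N" "a i \<noteq> 0" by blast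
    then show ?thesis unfolding mon_def by (auto intro!: prod_zero)
  qed
  have "((\<lambda>a. c a * mon N (\<lambda>i. 0) a) has_sum f z) {\<lambda>_. 0}"
    using hs by (subst has_sum_cong_neutral[where T="Idx N"]) (use z0 in \<open>auto simp: Idx_def\<close>)
  then show ?thesis by (simp add: mon_zero_idx has_sum_finite_iff)
qed


lemma ana_cont:
  assumes an: "ana_at N f z r c" and z: "z \<in> EucSp N" and e: "0 < e"
  shows "\<exists>d>0. \<forall>w\<in>EucSp N. (\<forall>i<N. \<bar>w i - z i\<bar> < d) \<longrightarrow> \<bar>f w - f z\<bar> < e"
proof -
  have r: "0 < r" using an unfolding ana_at_def by auto
  define \<rho> where "\<rho> = r / 2"
  have \<rho>: "0 < \<rho>" "\<rho> < r" using r unfolding \<rho>_def by auto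
  define M where "M = infsum (\<lambda>a. \<bar>c a\<bar> * \<rho> ^ deg N a) (Idx N)"
  have M0: "0 \<le> M" unfolding M_def using \<rho> by (intro infsum_nonneg) auto
  have S: "(\<lambda>a. c a * \<rho> ^ deg N a) summable_on Idx N" by (rule ana_summable[OF an z \<rho>])
  define \<delta> where "\<delta> = min \<rho> (e * \<rho> / (M + 1))"
  have \<delta>: "0 < \<delta>" "\<delta> \<le> \<rho>" "\<delta> \<le> e * \<rho> / (M + 1)" unfolding \<delta>_def using \<rho> e M0 by auto
  have key: "(\<delta> / \<rho>) * M < e"
  proof -
    have "(\<delta> / \<rho>) * M \<le> (e / (M + 1)) * M"
      using \<delta> \<rho> M0 by (intro mult_right_mono) (auto simp: field_simps)
    also have "\<dots> < e" using e M0 by (simp add: field_simps)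
    finally show ?thesis .
  qed
  show ?thesis
  proof (intro exI[of _ \<delta>] conjI allI ballI impI)
    show "0 < \<delta>" by fact
    fix w assume w: "w \<in> EucSp N" "\<forall>i<N. \<bar>w i - z i\<bar> < \<delta>"
    define h where "h = (\<lambda>i. w i - z i)"
    have hs: "((\<lambda>a. c a * mon N h a) has_sum f w) (Idx N)"
      using an w \<delta> \<rho> unfolding ana_at_def h_def by force
    have 0: "(\<lambda>_. 0) \<in> Idx N" unfolding Idx_def by auto
    have "f w = c (\<lambda>_. 0) * mon N h (\<lambda>_. 0) + infsum (\<lambda>a. c a * mon N h a) (Idx N - {\<lambda>_. 0})"
      using has_sum_split_finite[OF hs, of "{\<lambda>_. 0}"] 0 by simp
    also have "c (\<lambda>_. 0) = f z" using ana_val[OF an z] by simp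
    finally have fw: "f w - f z = infsum (\<lambda>a. c a * mon N h a) (Idx N - {\<lambda>_. 0})"
      by (simp add: mon_zero_idx)
    have dg: "\<forall>a\<in>Idx N - {\<lambda>_. 0}. mon N h a = 0 \<or> 1 \<le> deg N a"
    proof
      fix a assume "a \<in> Idx N - {\<lambda>_. 0}"
      then obtain i where "i < N" "a i \<noteq> 0" using Idx_zero_iff by blast
      then have "1 \<le> deg N a" using deg_ge[of i N a] by linarith
      then show "mon N h a = 0 \<or> 1 \<le> deg N a" by simp
    qed
    have hb: "\<forall>i<N. \<bar>h i\<bar> \<le> \<delta>" using w unfolding h_def by (auto simp: less_imp_le)
    have "\<bar>f w - f z\<bar> \<le> (\<delta>/\<rho>)^1 * M"
      unfolding fw M_def by (rule tail_bound(2)[OF S \<rho>(1) less_imp_le[OF \<delta>(1)] \<delta>(2) hb _ dg]) auto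
    with key show "\<bar>f w - f z\<bar> < e" by simp
  qed
qed

lemma deg_two:
  assumes "m < N" "u < N" "m \<noteq> u"
  shows "a m + a u \<le> deg N a"
proof -
  have "a m + a u = (\<Sum>i\<in>{m,u}. a i)" using assms by simp
  also have "\<dots> \<le> (\<Sum>i<N. a i)" using assms by (intro sum_mono2) auto
  finally show ?thesis unfolding deg_def .
qed

lemma ana_deriv2:
  assumes an: "ana_at N f z r c" and z: "z \<in> EucSp N" and mu: "m < N" "u < N" "m \<noteq> u"
  shows "((\<lambda>x. f (z(m := fst x, u := snd x))) has_derivative
           (\<lambda>h. c (unitv m) * fst h + c (unitv u) * snd h)) (at (z m, z u))"
proof -
  have r: "0 < r" using an unfolding ana_at_def by auto
  define \<rho> where "\<rho> = r / 2"
  have \<rho>: "0 < \<rho>" "\<rho> < r" using r unfolding \<rho>_def by auto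
  define M where "M = infsum (\<lambda>a. \<bar>c a\<bar> * \<rho> ^ deg N a) (Idx N)"
  have M0: "0 \<le> M" unfolding M_def using \<rho> by (intro infsum_nonneg) auto
  have S: "(\<lambda>a. c a * \<rho> ^ deg N a) summable_on Idx N" by (rule ana_summable[OF an z \<rho>])
  have bl: "bounded_linear (\<lambda>h::real\<times>real. c (unitv m) * fst h + c (unitv u) * snd h)"
    by (intro bounded_linear_add bounded_linear_mult_right[THEN bounded_linear_compose] bounded_linear_fst bounded_linear_snd)
  show ?thesis unfolding has_derivative_at_alt
  proof (intro conjI bl allI impI)
    fix \<epsilon> :: real assume \<epsilon>: "0 < \<epsilon>"
    define d where "d = min \<rho> (\<epsilon> * \<rho>^2 / (M + 1))"
    have d: "0 < d" "d \<le> \<rho>" "d \<le> \<epsilon> * \<rho>^2 / (M + 1)" unfolding d_def using \<rho> \<epsilon> M0 by auto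
    show "\<exists>d>0. \<forall>y. norm (y - (z m, z u)) < d \<longrightarrow>
        norm (f (z(m := fst y, u := snd y)) - f (z(m := fst (z m, z u), u := snd (z m, z u))) -
          (c (unitv m) * fst (y - (z m, z u)) + c (unitv u) * snd (y - (z m, z u))))
        \<le> \<epsilon> * norm (y - (z m, z u))"
    proof (intro exI[of _ d] conjI d(1) allI impI)
      fix y :: "real \<times> real" assume y: "norm (y - (z m, z u)) < d"
      define \<delta> where "\<delta> = norm (y - (z m, z u))"
      have \<delta>: "0 \<le> \<delta>" "\<delta> < d" using y unfolding \<delta>_def by auto
      define w where "w = z(m := fst y, u := snd y)"
      define h where "h = (\<lambda>i. w i - z i)"
      have wE: "w \<in> EucSp N" using z mu unfolding w_def EucSp_def by auto
      have h1: "\<bar>fst y - z m\<bar> \<le> \<delta>" unfolding \<delta>_def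
        using norm_fst_le[of "fst y - z m" "snd y - z u"] by (cases y) simp
      have h2: "\<bar>snd y - z u\<bar> \<le> \<delta>" unfolding \<delta>_def
        using norm_snd_le[of "snd y - z u" "fst y - z m"] by (cases y) simp
      have hval: "h i = (if i = m then fst y - z m else if i = u then snd y - z u else 0)" for i
        unfolding h_def w_def using mu by auto
      have hb: "\<forall>i<N. \<bar>h i\<bar> \<le> \<delta>" using h1 h2 \<delta> by (auto simp: hval)
      have "\<forall>i<N. \<bar>w i - z i\<bar> < r" using hb \<delta> d \<rho> unfolding h_def by force
      then have hs: "((\<lambda>a. c a * mon N h a) has_sum f w) (Idx N)"
        using an wE unfolding ana_at_def h_def by blast
      define F where "F = {(\<lambda>_. 0::nat), unitv m, unitv u}"
      have F: "F \<subseteq> Idx N" "finite F" unfolding F_def using mu unitv_Idx by (auto simp: Idx_def)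
      have ne: "(\<lambda>_. 0::nat) \<noteq> unitv m" "(\<lambda>_. 0::nat) \<noteq> unitv u" "unitv m \<noteq> unitv u"
        using mu unfolding unitv_def by (auto simp: fun_eq_iff)
      have sF: "sum (\<lambda>a. c a * mon N h a) F = c (\<lambda>_. 0) + c (unitv m) * (fst y - z m) + c (unitv u) * (snd y - z u)"
        unfolding F_def using ne mu by (simp add: mon_zero_idx mon_unitv hval)
      have fw: "f w = c (\<lambda>_. 0) + c (unitv m) * (fst y - z m) + c (unitv u) * (snd y - z u)
                  + infsum (\<lambda>a. c a * mon N h a) (Idx N - F)"
        using has_sum_split_finite[OF hs F] sF by simp
      have dg: "\<forall>a\<in>Idx N - F. mon N h a = 0 \<or> 2 \<le> deg N a"
      proof
        fix a assume a: "a \<in> Idx N - F"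
        show "mon N h a = 0 \<or> 2 \<le> deg N a"
        proof (cases "mon N h a = 0")
          case True then show ?thesis by simp
        next
          case False
          note mz = False
          have oth: "a i = 0" if "i < N" "i \<noteq> m" "i \<noteq> u" for i
          proof (rule ccontr)
            assume "a i \<noteq> 0"
            then have "h i ^ a i = 0" using that by (simp add: hval)
            then have "mon N h a = 0" unfolding mon_def using that by (intro prod_zero) auto
            with mz show False by simp
          qed
          have "2 \<le> deg N a"
          proof (rule ccontr)
            assume "\<not> 2 \<le> deg N a"
            then have le: "a m + a u \<le> 1" using deg_two[OF mu, of a] by linarith
            have aI: "a \<in> Idx N" using a by auto
            have "a = (\<lambda>_. 0) \<or> a = unitv m \<or> a = unitv u"
            proof -
              have out: "a i = 0" if "i \<ge> N" for i using aI that unfolding Idx_def by auto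
              consider "a m = 0" "a u = 0" | "a m = 1" "a u = 0" | "a m = 0" "a u = 1" using le by linarith
              then show ?thesis
              proof cases
                case 1 then have "a = (\<lambda>_. 0)" using oth out by (auto simp: fun_eq_iff) (metis not_le)
                then show ?thesis by simp
              next
                case 2 then have "a = unitv m" using oth out mu unfolding unitv_def by (auto simp: fun_eq_iff) (metis not_le)
                then show ?thesis by simp
              next
                case 3 then have "a = unitv u" using oth out mu unfolding unitv_def by (auto simp: fun_eq_iff) (metis not_le)
                then show ?thesis by simp
              qed
            qed
            with a show False unfolding F_def by auto
          qed
          then show ?thesis by simp
        qed
      qed
      have tb: "\<bar>infsum (\<lambda>a. c a * mon N h a) (Idx N - F)\<bar> \<le> (\<delta>/\<rho>)^2 * M"
        unfolding M_def using \<delta> d by (intro tail_bound(2)[OF S \<rho>(1) \<delta>(1) _ hb _ dg]) auto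
      have "(\<delta>/\<rho>)^2 * M = \<delta> * (\<delta> * M / \<rho>^2)" using \<rho> by (simp add: power2_eq_square field_simps)
      also have "\<dots> \<le> \<delta> * \<epsilon>"
      proof (intro mult_left_mono \<delta>(1))
        have "\<delta> * M / \<rho>^2 \<le> (\<epsilon> * \<rho>^2 / (M + 1)) * M / \<rho>^2"
          using \<delta> d M0 \<rho> by (intro divide_right_mono mult_right_mono) auto
        also have "\<dots> = \<epsilon> * (M / (M + 1))"
        proof -
          have "\<rho>^2 \<noteq> 0" "M + 1 \<noteq> 0" using \<rho> M0 by auto
          then show ?thesis by (simp add: divide_simps)
        qed
        also have "\<dots> \<le> \<epsilon> * 1" using \<epsilon> M0 by (intro mult_left_mono) auto
        finally show "\<delta> * M / \<rho>^2 \<le> \<epsilon>" by simp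
      qed
      finally have fin: "(\<delta>/\<rho>)^2 * M \<le> \<epsilon> * \<delta>" by (simp add: mult_ac)
      have fz: "f (z(m := fst (z m, z u), u := snd (z m, z u))) = c (\<lambda>_. 0)"
        using ana_val[OF an z] by simp
      show "norm (f (z(m := fst y, u := snd y)) - f (z(m := fst (z m, z u), u := snd (z m, z u))) -
          (c (unitv m) * fst (y - (z m, z u)) + c (unitv u) * snd (y - (z m, z u))))
        \<le> \<epsilon> * norm (y - (z m, z u))"
        using fw tb fin fz unfolding w_def \<delta>_def by simp
    qed
  qed
qed

lemma has_sum_diff':
  fixes f g :: "'a \<Rightarrow> real"
  assumes "(f has_sum a) A" "(g has_sum b) A"
  shows "((\<lambda>x. f x - g x) has_sum (a - b)) A"
proof -
  have "((\<lambda>x. - g x) has_sum (- b)) A" using has_sum_uminus[where f=g and a="-b" and A=A] assms(2) by simp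
  from has_sum_add[OF assms(1) this] show ?thesis by simp
qed

lemma has_sum_abs_bound:
  fixes g G :: "'a \<Rightarrow> real"
  assumes "(g has_sum S) A" "(G has_sum T) A" "\<And>a. a \<in> A \<Longrightarrow> \<bar>g a\<bar> \<le> G a"
  shows "\<bar>S\<bar> \<le> T"
proof -
  have "S \<le> T" by (rule has_sum_mono[OF assms(1,2)]) (use assms(3) in force)
  moreover have "((\<lambda>x. - g x) has_sum (- S)) A" using has_sum_uminus[where f=g and a="-S" and A=A] assms(1) by simp
  then have "-S \<le> T" by (rule has_sum_mono[OF _ assms(2)]) (use assms(3) in force)
  ultimately show ?thesis by simp
qed

lemma num1:
  assumes "0 < (\<rho>::real)"
  shows "real n * (\<rho>/4)^(n - 1) \<le> 4/\<rho> * \<rho>^n"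
proof (cases n)
  case 0 then show ?thesis using assms by simp
next
  case (Suc m)
  have "Suc m < 2 ^ Suc m" by (rule less_exp)
  also have "(2::nat) ^ Suc m \<le> 4 ^ Suc m" by (intro power_mono) auto
  finally have "Suc m \<le> 4 * 4 ^ m" by simp
  then have e: "real (Suc m) \<le> 4 * 4 ^ m" by (metis of_nat_le_iff of_nat_mult of_nat_numeral of_nat_power)
  have "real n * (\<rho>/4)^(n - 1) = real (Suc m) * (\<rho>^m / 4^m)" using Suc by (simp add: power_divide)
  also have "\<dots> \<le> (4 * 4^m) * (\<rho>^m / 4^m)" using e assms by (intro mult_right_mono) auto
  also have "\<dots> = 4/\<rho> * \<rho>^n" using Suc assms by simp
  finally show ?thesis .
qed

lemma num2:
  assumes "0 < (\<rho>::real)"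
  shows "real n * real (n - Suc 0) * (\<rho>/4)^(n - 2) \<le> 16/\<rho>^2 * \<rho>^n"
proof (cases "n < 2")
  case True then have "n = 0 \<or> n = 1" by auto
  then show ?thesis using assms by auto
next
  case False
  then obtain m where m: "n = Suc (Suc m)" by (metis add_2_eq_Suc le_Suc_ex not_less)
  have "Suc (Suc m) < 2 ^ Suc (Suc m)" by (rule less_exp)
  then have "Suc (Suc m) * Suc m \<le> 2 ^ Suc (Suc m) * 2 ^ Suc (Suc m)"
    by (intro mult_le_mono) auto
  also have "\<dots> = 16 * 4 ^ m" by (simp add: power_mult_distrib[symmetric])
  finally have "Suc (Suc m) * Suc m \<le> 16 * 4 ^ m" .
  then have e: "real (Suc (Suc m)) * real (Suc m) \<le> 16 * 4 ^ m"
    by (metis of_nat_le_iff of_nat_mult of_nat_numeral of_nat_power)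
  have "real n * real (n - Suc 0) * (\<rho>/4)^(n - 2) = (real (Suc (Suc m)) * real (Suc m)) * (\<rho>^m / 4^m)"
    using m by (simp add: power_divide)
  also have "\<dots> \<le> (16 * 4^m) * (\<rho>^m / 4^m)" using e assms by (intro mult_right_mono) auto
  also have "\<dots> = 16/\<rho>^2 * \<rho>^n" using m assms by (simp add: power2_eq_square)
  finally show ?thesis .
qed

lemma mon_split:
  assumes "k < N"
  shows "mon N g a = g k ^ a k * (\<Prod>i\<in>{..<N}-{k}. g i ^ a i)"
  unfolding mon_def using assms by (simp add: prod.remove)

lemma abs_coeff_summable:
  fixes c :: "(nat \<Rightarrow> nat) \<Rightarrow> real"
  assumes S: "(\<lambda>a. c a * \<rho> ^ deg N a) summable_on Idx N" and "0 < \<rho>"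
  shows "(\<lambda>a. \<bar>c a\<bar> * \<rho> ^ deg N a) summable_on Idx N"
proof -
  have "(\<lambda>a. norm (c a * \<rho> ^ deg N a)) summable_on Idx N"
    using summable_on_iff_abs_summable_on_real[THEN iffD1, OF S] .
  moreover have "(\<lambda>a. norm (c a * \<rho> ^ deg N a)) = (\<lambda>a. \<bar>c a\<bar> * \<rho> ^ deg N a)"
    using assms(2) by (simp add: abs_mult)
  ultimately show ?thesis by simp
qed


lemma ana_pd:
  assumes an: "ana_at N f z r c" and z: "z \<in> EucSp N" and k: "k < N"
  shows "ana_at N (pd k f) z (r/8) (\<lambda>b. real (b k + 1) * c (b(k := b k + 1)))"
proof -
  have r: "0 < r" using an unfolding ana_at_def by auto
  define \<rho> where "\<rho> = r/2"
  have \<rho>: "0 < \<rho>" "\<rho> < r" using r unfolding \<rho>_def by auto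
  define K where "K = \<rho>/4"
  have K: "0 < K" "K < \<rho>" "K = r/8" using \<rho> unfolding K_def \<rho>_def by auto
  define M where "M = infsum (\<lambda>a. \<bar>c a\<bar> * \<rho> ^ deg N a) (Idx N)"
  have S: "(\<lambda>a. c a * \<rho> ^ deg N a) summable_on Idx N" by (rule ana_summable[OF an z \<rho>])
  have S1: "(\<lambda>a. \<bar>c a\<bar> * \<rho> ^ deg N a) summable_on Idx N" by (rule abs_coeff_summable[OF S \<rho>(1)])
  have S1h: "((\<lambda>a. \<bar>c a\<bar> * \<rho> ^ deg N a) has_sum M) (Idx N)"
    using S1 unfolding M_def by (simp add: summable_iff_has_sum_infsum)
  show ?thesis unfolding ana_at_def
  proof (intro conjI ballI impI)
    show "0 < r/8" using r by simp
    fix w assume wE: "w \<in> EucSp N" and wb: "\<forall>i<N. \<bar>w i - z i\<bar> < r/8"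
    define h where "h = (\<lambda>i. w i - z i)"
    define s where "s = h k"
    define R where "R = (\<lambda>a::nat\<Rightarrow>nat. \<Prod>i\<in>{..<N}-{k}. h i ^ a i)"
    define dR where "dR = (\<lambda>a::nat\<Rightarrow>nat. \<Sum>i\<in>{..<N}-{k}. a i)"
    have hb: "\<forall>i<N. \<bar>h i\<bar> < K" using wb K unfolding h_def by auto
    have sK: "\<bar>s\<bar> < K" using hb k unfolding s_def by auto
    have Rb: "\<bar>R a\<bar> \<le> \<rho> ^ dR a" for a
    proof -
      have "\<bar>R a\<bar> = (\<Prod>i\<in>{..<N}-{k}. \<bar>h i\<bar> ^ a i)" unfolding R_def by (simp add: abs_prod power_abs)
      also have "\<dots> \<le> (\<Prod>i\<in>{..<N}-{k}. \<rho> ^ a i)"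
        by (rule prod_mono) (use hb K in \<open>auto intro!: power_mono\<close>)
      also have "\<dots> = \<rho> ^ dR a" unfolding dR_def by (simp add: power_sum)
      finally show ?thesis .
    qed
    have degs: "deg N a = a k + dR a" for a unfolding deg_def dR_def using k by (simp add: sum.remove)
    define \<phi> where "\<phi> = (\<lambda>x. f (w(k := z k + x)))"
    have \<phi>hs: "((\<lambda>a. c a * (x ^ a k * R a)) has_sum \<phi> x) (Idx N)" if "\<bar>x\<bar> \<le> K" for x
    proof -
      have wx: "w(k := z k + x) \<in> EucSp N" using wE k unfolding EucSp_def by auto
      have "\<forall>i<N. \<bar>(w(k := z k + x)) i - z i\<bar> < r" using that wb K \<rho> by auto
      then have "((\<lambda>a. c a * mon N (\<lambda>i. (w(k := z k + x)) i - z i) a) has_sum \<phi> x) (Idx N)"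
        using an wx unfolding ana_at_def \<phi>_def by blast
      moreover have "mon N (\<lambda>i. (w(k := z k + x)) i - z i) a = x ^ a k * R a" for a
        unfolding mon_split[OF k] R_def h_def by (auto intro!: prod.cong)
      ultimately show ?thesis by simp
    qed
    define Dt where "Dt = (\<lambda>a. c a * (real (a k) * s ^ (a k - 1) * R a))"
    have Dtb: "\<bar>Dt a\<bar> \<le> 4/\<rho> * (\<bar>c a\<bar> * \<rho> ^ deg N a)" for a
    proof -
      have "\<bar>s ^ (a k - 1)\<bar> \<le> K ^ (a k - 1)" using sK by (simp add: power_abs power_mono)
      then have "real (a k) * \<bar>s^(a k - 1)\<bar> \<le> real (a k) * K^(a k - 1)" by (intro mult_left_mono) auto
      also have "\<dots> \<le> 4/\<rho> * \<rho>^(a k)" using num1[OF \<rho>(1), of "a k"] unfolding K_def .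
      finally have 1: "real (a k) * \<bar>s^(a k - 1)\<bar> \<le> 4/\<rho> * \<rho>^(a k)" .
      have "\<bar>Dt a\<bar> = \<bar>c a\<bar> * ((real (a k) * \<bar>s^(a k - 1)\<bar>) * \<bar>R a\<bar>)" unfolding Dt_def by (simp add: abs_mult)
      also have "\<dots> \<le> \<bar>c a\<bar> * ((4/\<rho> * \<rho>^(a k)) * \<rho> ^ dR a)"
      proof -
        have "(real (a k) * \<bar>s^(a k - 1)\<bar>) * \<bar>R a\<bar> \<le> (4/\<rho> * \<rho>^(a k)) * \<rho> ^ dR a"
          by (rule mult_mono[OF 1 Rb]) (use \<rho> in auto)
        then show ?thesis by (intro mult_left_mono) auto
      qed
      also have "\<dots> = 4/\<rho> * (\<bar>c a\<bar> * \<rho> ^ deg N a)" by (simp add: degs power_add)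
      finally show ?thesis .
    qed
    have DS: "Dt summable_on Idx N"
    proof -
      have "(\<lambda>a. 4/\<rho> * (\<bar>c a\<bar> * \<rho> ^ deg N a)) summable_on Idx N" using S1 by (rule summable_on_cmult_right)
      then have "(\<lambda>a. norm (4/\<rho> * (\<bar>c a\<bar> * \<rho> ^ deg N a))) summable_on Idx N"
        using summable_on_iff_abs_summable_on_real[THEN iffD1] by blast
      then have "(\<lambda>a. norm (Dt a)) summable_on Idx N"
        by (rule Infinite_Sum.abs_summable_on_comparison_test) (use Dtb \<rho> in \<open>simp\<close>)
      then show ?thesis using summable_on_iff_abs_summable_on_real[THEN iffD2] by blast
    qed
    define D where "D = infsum Dt (Idx N)"
    have Dhs: "(Dt has_sum D) (Idx N)" using DS unfolding D_def by (simp add: summable_iff_has_sum_infsum)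
    have der: "(\<phi> has_real_derivative D) (at s)"
    proof -
      have "((\<lambda>y. (\<phi> (s + y) - \<phi> s) / y - D) \<longlongrightarrow> 0) (at 0)"
      proof (rule Lim_null_comparison)
        have ev: "eventually (\<lambda>y::real. y \<noteq> 0 \<and> \<bar>y\<bar> < K - \<bar>s\<bar>) (at 0)"
          using sK unfolding eventually_at by (intro exI[of _ "K - \<bar>s\<bar>"]) auto
        show "eventually (\<lambda>y. norm ((\<phi> (s + y) - \<phi> s) / y - D) \<le> 16/\<rho>^2 * M * \<bar>y\<bar>) (at 0)"
          using ev
        proof (rule eventually_mono)
          fix y :: real assume y: "y \<noteq> 0 \<and> \<bar>y\<bar> < K - \<bar>s\<bar>"
          have sy: "\<bar>s + y\<bar> \<le> K" using y by auto
          define g where "g = (\<lambda>a. c a * ((s+y)^(a k) * R a) - c a * (s^(a k) * R a))"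
          have "(g has_sum (\<phi> (s+y) - \<phi> s)) (Idx N)"
            unfolding g_def by (rule has_sum_diff'[OF \<phi>hs[OF sy] \<phi>hs]) (use sK in auto)
          then have "((\<lambda>a. inverse y * g a) has_sum (inverse y * (\<phi> (s+y) - \<phi> s))) (Idx N)"
            by (rule has_sum_cmult_right)
          then have A: "((\<lambda>a. inverse y * g a - Dt a) has_sum ((\<phi> (s + y) - \<phi> s) / y - D)) (Idx N)"
            using has_sum_diff'[OF _ Dhs] by (simp add: divide_inverse mult.commute)
          have B: "((\<lambda>a. 16/\<rho>^2 * \<bar>y\<bar> * (\<bar>c a\<bar> * \<rho> ^ deg N a)) has_sum (16/\<rho>^2 * \<bar>y\<bar> * M)) (Idx N)"
            by (rule has_sum_cmult_right[OF S1h])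
          have C: "\<bar>inverse y * g a - Dt a\<bar> \<le> 16/\<rho>^2 * \<bar>y\<bar> * (\<bar>c a\<bar> * \<rho> ^ deg N a)" for a
          proof -
            have eq: "inverse y * g a - Dt a = c a * R a * (((s + y)^(a k) - s^(a k)) / y - of_nat (a k) * s^(a k - Suc 0))"
              unfolding g_def Dt_def using y by (simp add: field_simps)
            have t3: "\<bar>((s + y)^(a k) - s^(a k)) / y - of_nat (a k) * s^(a k - Suc 0)\<bar>
                \<le> of_nat (a k) * of_nat (a k - Suc 0) * K^(a k - 2) * \<bar>y\<bar>"
              using lemma_termdiff3[of y s K "a k"] y sK sy by simp
            also have "\<dots> \<le> 16/\<rho>^2 * \<rho>^(a k) * \<bar>y\<bar>"
              using num2[OF \<rho>(1), of "a k"] unfolding K_def by (intro mult_right_mono) auto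
            finally have t4: "\<bar>((s + y)^(a k) - s^(a k)) / y - of_nat (a k) * s^(a k - Suc 0)\<bar> \<le> 16/\<rho>^2 * \<rho>^(a k) * \<bar>y\<bar>" .
            have "\<bar>inverse y * g a - Dt a\<bar> = \<bar>c a\<bar> * \<bar>R a\<bar> * \<bar>((s + y)^(a k) - s^(a k)) / y - of_nat (a k) * s^(a k - Suc 0)\<bar>"
              unfolding eq by (simp add: abs_mult)
            also have "\<dots> \<le> \<bar>c a\<bar> * \<rho> ^ dR a * (16/\<rho>^2 * \<rho>^(a k) * \<bar>y\<bar>)"
              using Rb t4 \<rho> by (intro mult_mono mult_left_mono) auto
            also have "\<dots> = 16/\<rho>^2 * \<bar>y\<bar> * (\<bar>c a\<bar> * \<rho> ^ deg N a)" by (simp add: degs power_add mult_ac)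
            finally show ?thesis .
          qed
          have "\<bar>(\<phi> (s + y) - \<phi> s) / y - D\<bar> \<le> 16/\<rho>^2 * \<bar>y\<bar> * M"
            by (rule has_sum_abs_bound[OF A B C])
          then show "norm ((\<phi> (s + y) - \<phi> s) / y - D) \<le> 16/\<rho>^2 * M * \<bar>y\<bar>" by (simp add: mult_ac)
        qed
        show "((\<lambda>y. 16/\<rho>^2 * M * \<bar>y\<bar>) \<longlongrightarrow> 0) (at (0::real))"
          using \<rho> by (auto intro!: tendsto_eq_intros)
      qed
      then show ?thesis unfolding DERIV_def by (simp add: LIM_zero_iff)
    qed
    have pdv: "pd k f w = D"
    proof -
      have "((\<lambda>t. \<phi> (t - z k)) has_real_derivative D * 1) (at (w k))"
        by (rule DERIV_chain2[of \<phi>]) (use der in \<open>auto simp: s_def h_def intro!: derivative_eq_intros\<close>)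
      moreover have "(\<lambda>t. \<phi> (t - z k)) = (\<lambda>t. f (w(k := t)))" unfolding \<phi>_def by simp
      ultimately show ?thesis unfolding pd_def using DERIV_imp_deriv by fastforce
    qed
    define \<sigma> where "\<sigma> = (\<lambda>b::nat\<Rightarrow>nat. b(k := b k + 1))"
    have inj: "inj_on \<sigma> (Idx N)"
    proof (rule inj_onI)
      fix b b' assume "\<sigma> b = \<sigma> b'"
      then have "\<forall>i. (\<sigma> b) i = (\<sigma> b') i" by simp
      then show "b = b'" unfolding \<sigma>_def by (auto simp: fun_eq_iff split: if_splits)
    qed
    have img: "\<sigma> ` Idx N = {a \<in> Idx N. a k \<noteq> 0}"
    proof
      show "\<sigma> ` Idx N \<subseteq> {a \<in> Idx N. a k \<noteq> 0}" unfolding \<sigma>_def Idx_def using k by auto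
      show "{a \<in> Idx N. a k \<noteq> 0} \<subseteq> \<sigma> ` Idx N"
      proof
        fix a assume a: "a \<in> {a \<in> Idx N. a k \<noteq> 0}"
        then have "a = \<sigma> (a(k := a k - 1))" unfolding \<sigma>_def by (auto simp: fun_eq_iff)
        moreover have "a(k := a k - 1) \<in> Idx N" using a k unfolding Idx_def by auto
        ultimately show "a \<in> \<sigma> ` Idx N" by blast
      qed
    qed
    have "(Dt has_sum D) {a \<in> Idx N. a k \<noteq> 0}"
      using Dhs by (subst has_sum_cong_neutral[where T="Idx N"]) (auto simp: Dt_def)
    then have "(Dt has_sum D) (\<sigma> ` Idx N)" using img by simp
    then have "((Dt \<circ> \<sigma>) has_sum D) (Idx N)" using has_sum_reindex[OF inj] by blast
    moreover have "(Dt \<circ> \<sigma>) b = real (b k + 1) * c (b(k := b k + 1)) * mon N (\<lambda>i. w i - z i) b" for b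
    proof -
      have Rs: "R (b(k := b k + 1)) = R b" unfolding R_def by (intro prod.cong) auto
      have mb: "mon N (\<lambda>i. w i - z i) b = s ^ b k * R b" unfolding mon_split[OF k] R_def s_def h_def by simp
      have "(Dt \<circ> \<sigma>) b = c (b(k := b k + 1)) * (real (b k + 1) * s ^ b k * R (b(k := b k + 1)))"
        unfolding Dt_def \<sigma>_def comp_def by simp
      then show ?thesis unfolding mb Rs by (simp only: mult_ac)
    qed
    ultimately show "((\<lambda>a. real (a k + 1) * c (a(k := a k + 1)) * mon N (\<lambda>i. w i - z i) a) has_sum pd k f w) (Idx N)"
      using pdv by (simp add: comp_def)
  qed
qed

lemma real_analytic_of_ana:
  assumes "\<forall>z\<in>D. \<exists>r c. ana_at N f z r c"
  shows "real_analytic_on N f D"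
  using assms unfolding real_analytic_on_def ana_at_def mon_def Idx_def by blast

lemma real_analytic_pd:
  assumes "real_analytic_on N f D" "D \<subseteq> EucSp N" "k < N"
  shows "real_analytic_on N (pd k f) D"
proof (rule real_analytic_of_ana, intro ballI)
  fix z assume z: "z \<in> D"
  obtain r c where "ana_at N f z r c" using ana_of_real_analytic[OF assms(1) z] by blast
  from ana_pd[OF this _ assms(3)] z assms(2) show "\<exists>r c. ana_at N (pd k f) z r c" by blast
qed

lemma d2to1:
  assumes "(F has_derivative (\<lambda>h. A * fst h + B * snd h)) (at (a, b))"
  shows "((\<lambda>t. F (t, b)) has_real_derivative A) (at a)"
    and "((\<lambda>t. F (a, t)) has_real_derivative B) (at b)"
proof -
  have g1: "((\<lambda>t::real. (t, b)) has_derivative (\<lambda>h. (h, 0))) (at a)"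
    by (auto intro!: derivative_eq_intros)
  have "((F \<circ> (\<lambda>t. (t, b))) has_derivative ((\<lambda>h. A * fst h + B * snd h) \<circ> (\<lambda>h. (h, 0)))) (at a)"
    by (rule diff_chain_at[OF g1]) (use assms in simp)
  moreover have "((\<lambda>h. A * fst h + B * snd h) \<circ> (\<lambda>h. (h, 0))) = (*) A" by (auto simp: fun_eq_iff)
  ultimately show "((\<lambda>t. F (t, b)) has_real_derivative A) (at a)"
    unfolding has_field_derivative_def by (simp add: comp_def)
  have g2: "((\<lambda>t::real. (a, t)) has_derivative (\<lambda>h. (0, h))) (at b)"
    by (auto intro!: derivative_eq_intros)
  have "((F \<circ> (\<lambda>t. (a, t))) has_derivative ((\<lambda>h. A * fst h + B * snd h) \<circ> (\<lambda>h. (0, h)))) (at b)"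
    by (rule diff_chain_at[OF g2]) (use assms in simp)
  moreover have "((\<lambda>h. A * fst h + B * snd h) \<circ> (\<lambda>h. (0, h))) = (*) B" by (auto simp: fun_eq_iff)
  ultimately show "((\<lambda>t. F (a, t)) has_real_derivative B) (at b)"
    unfolding has_field_derivative_def by (simp add: comp_def)
qed

lemma ana_pd_coeff:
  assumes an: "ana_at N f z r c" and z: "z \<in> EucSp N" and mu: "m < N" "u < N" "m \<noteq> u"
  shows "((\<lambda>t. f (z(m := t))) has_real_derivative c (unitv m)) (at (z m))"
    and "pd m f z = c (unitv m)"
proof -
  have "((\<lambda>t. f (z(m := fst (t, z u), u := snd (t, z u)))) has_real_derivative c (unitv m)) (at (z m))"
    by (rule d2to1(1)[OF ana_deriv2[OF an z mu]])
  moreover have "\<And>t. z(m := t, u := z u) = z(m := t)" using mu by (auto simp: fun_eq_iff)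
  ultimately show 1: "((\<lambda>t. f (z(m := t))) has_real_derivative c (unitv m)) (at (z m))"
    by (simp only: fst_conv snd_conv)
  show "pd m f z = c (unitv m)" unfolding pd_def using DERIV_imp_deriv[OF 1] .
qed

lemma ra_deriv1:
  assumes "real_analytic_on N f D" "D \<subseteq> EucSp N" "z \<in> D" "i < N" "j < N" "i \<noteq> j"
  shows "((\<lambda>t. f (z(i := t))) has_real_derivative pd i f z) (at (z i))"
proof -
  obtain r c where an: "ana_at N f z r c" using ana_of_real_analytic[OF assms(1,3)] by blast
  have z: "z \<in> EucSp N" using assms by auto
  show ?thesis using ana_pd_coeff[OF an z assms(4-6)] by simp
qed

lemma ra_deriv2:
  assumes "real_analytic_on N f D" "D \<subseteq> EucSp N" "z \<in> D" "m < N" "u < N" "m \<noteq> u"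
  shows "((\<lambda>x. f (z(m := fst x, u := snd x))) has_derivative
           (\<lambda>h. pd m f z * fst h + pd u f z * snd h)) (at (z m, z u))"
proof -
  obtain r c where an: "ana_at N f z r c" using ana_of_real_analytic[OF assms(1,3)] by blast
  have z: "z \<in> EucSp N" using assms by auto
  have "pd m f z = c (unitv m)" using ana_pd_coeff(2)[OF an z assms(4-6)] .
  moreover have "pd u f z = c (unitv u)" using ana_pd_coeff(2)[OF an z assms(5,4)] assms(6) by auto
  ultimately show ?thesis using ana_deriv2[OF an z assms(4-6)] by simp
qed

lemma ra_cont:
  assumes "real_analytic_on N f D" "D \<subseteq> EucSp N" "z \<in> D" "0 < e"
  shows "\<exists>d>0. \<forall>w\<in>EucSp N. (\<forall>i<N. \<bar>w i - z i\<bar> < d) \<longrightarrow> \<bar>f w - f z\<bar> < e"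
proof -
  obtain r c where an: "ana_at N f z r c" using ana_of_real_analytic[OF assms(1,3)] by blast
  have z: "z \<in> EucSp N" using assms by auto
  show ?thesis by (rule ana_cont[OF an z assms(4)])
qed

subsection \<open>Topology of boxes\<close>

lemma box_openin:
  assumes "\<And>i. i < N \<Longrightarrow> open (U i)"
  shows "openin (top_of_set (EucSp N)) {w \<in> EucSp N. \<forall>i<N. w i \<in> U i}"
proof -
  have "open {f::nat\<Rightarrow>real. \<forall>i\<in>{..<N}. f (id i) \<in> U i}"
    by (rule product_topology_basis') (use assms in auto)
  then have "openin (top_of_set (EucSp N)) (EucSp N \<inter> {f::nat\<Rightarrow>real. \<forall>i\<in>{..<N}. f (id i) \<in> U i})"
    by (rule openin_open_Int)
  moreover have "EucSp N \<inter> {f::nat\<Rightarrow>real. \<forall>i\<in>{..<N}. f (id i) \<in> U i} = {w \<in> EucSp N. \<forall>i<N. w i \<in> U i}"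
    by auto
  ultimately show ?thesis by simp
qed

lemma openin_by_boxes:
  assumes "X \<subseteq> EucSp N" "\<forall>w\<in>X. \<exists>d>0. \<forall>v\<in>EucSp N. (\<forall>i<N. \<bar>v i - w i\<bar> < d) \<longrightarrow> v \<in> X"
  shows "openin (top_of_set (EucSp N)) X"
  unfolding openin_subopen[of _ X]
proof
  fix w assume w: "w \<in> X"
  then obtain d where d: "d > 0" "\<forall>v\<in>EucSp N. (\<forall>i<N. \<bar>v i - w i\<bar> < d) \<longrightarrow> v \<in> X" using assms by blast
  define T where "T = {v \<in> EucSp N. \<forall>i<N. v i \<in> ball (w i) d}"
  have "openin (top_of_set (EucSp N)) T" unfolding T_def by (rule box_openin) auto
  moreover have "w \<in> T" unfolding T_def using w assms d by auto
  moreover have "T \<subseteq> X" unfolding T_def using d by (auto simp: dist_real_def abs_minus_commute)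
  ultimately show "\<exists>T. openin (top_of_set (EucSp N)) T \<and> w \<in> T \<and> T \<subseteq> X" by blast
qed

lemma box_of_openin:
  assumes "openin (top_of_set (EucSp N)) D" "z \<in> D"
  shows "\<exists>d>0. \<forall>v\<in>EucSp N. (\<forall>i<N. \<bar>v i - z i\<bar> < d) \<longrightarrow> v \<in> D"
proof -
  obtain T where T: "open T" "D = EucSp N \<inter> T" using assms(1) openin_open by blast
  have zT: "z \<in> T" "z \<in> EucSp N" using T assms(2) by auto
  have "openin (product_topology (\<lambda>i. euclidean) UNIV) T" using T(1) unfolding open_fun_def .
  from product_topology_open_contains_basis[OF this zT(1)]
  obtain X where X: "z \<in> (\<Pi>\<^sub>E i\<in>UNIV. X i)" "\<forall>i. open (X i)" "finite {i. X i \<noteq> UNIV}"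
      "(\<Pi>\<^sub>E i\<in>UNIV. X i) \<subseteq> T" by auto
  define F where "F = {i. X i \<noteq> UNIV}"
  have "\<forall>i. \<exists>e>0. ball (z i) e \<subseteq> X i"
    using X(1,2) by (meson PiE_E UNIV_I open_contains_ball)
  then obtain \<epsilon> where \<epsilon>: "\<And>i. \<epsilon> i > 0" "\<And>i. ball (z i) (\<epsilon> i) \<subseteq> X i" by metis
  define d where "d = Min (insert 1 (\<epsilon> ` F))"
  have fin: "finite (insert 1 (\<epsilon> ` F))" using X(3) unfolding F_def by auto
  have d0: "d > 0" unfolding d_def using fin \<epsilon>(1) by (subst Min_gr_iff) auto
  have dle: "d \<le> \<epsilon> i" if "i \<in> F" for i unfolding d_def using fin that by (intro Min_le) auto
  show ?thesis
  proof (intro exI[of _ d] conjI d0 ballI impI)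
    fix v assume v: "v \<in> EucSp N" "\<forall>i<N. \<bar>v i - z i\<bar> < d"
    have "v i \<in> X i" for i
    proof (cases "i \<in> F")
      case False then show ?thesis unfolding F_def by auto
    next
      case True
      show ?thesis
      proof (cases "i < N")
        case True
        then have "v i \<in> ball (z i) (\<epsilon> i)" using v dle[OF \<open>i \<in> F\<close>] by (auto simp: dist_real_def abs_minus_commute)
        then show ?thesis using \<epsilon>(2)[of i] by blast
      next
        case False
        then have "v i = z i" using v zT unfolding EucSp_def by auto
        then show ?thesis using X(1) by auto
      qed
    qed
    then have "v \<in> T" using X(4) by auto
    then show "v \<in> D" using T v by auto
  qed
qed

lemma L2D:
  fixes F G :: "real \<times> real \<Rightarrow> real" and \<phi> :: "real \<Rightarrow> real \<Rightarrow> real"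
  assumes S: "open S" and x0: "(s0, t0) \<in> S"
    and dF: "\<And>s t. (s, t) \<in> S \<Longrightarrow> (F has_derivative (\<lambda>h. Fs s t * fst h + Ft s t * snd h)) (at (s, t))"
    and dG: "(G has_derivative (\<lambda>h. Gs * fst h + Gt * snd h)) (at (s0, t0))"
    and nz: "Ft s0 t0 \<noteq> 0"
    and inv: "\<And>s t. (s, t) \<in> S \<Longrightarrow> \<phi> s (F (s, t)) = t"
  shows "((\<lambda>y. G (fst y, \<phi> (fst y) (snd y))) has_derivative
           (\<lambda>h. (Gs - Gt * Fs s0 t0 / Ft s0 t0) * fst h + (Gt / Ft s0 t0) * snd h)) (at (s0, F (s0, t0)))"
proof -
  define \<Phi> where "\<Phi> = (\<lambda>x::real\<times>real. (fst x, F x))"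
  define \<Psi> where "\<Psi> = (\<lambda>y::real\<times>real. (fst y, \<phi> (fst y) (snd y)))"
  define \<Phi>' where "\<Phi>' = (\<lambda>h::real\<times>real. (fst h, Fs s0 t0 * fst h + Ft s0 t0 * snd h))"
  define \<Psi>' where "\<Psi>' = (\<lambda>h::real\<times>real. (fst h, (snd h - Fs s0 t0 * fst h) / Ft s0 t0))"
  have contF: "continuous_on S F"
  proof (rule continuous_at_imp_continuous_on, rule ballI)
    fix x assume "x \<in> S"
    then obtain s t where "x = (s, t)" "(s, t) \<in> S" by (cases x) auto
    then show "isCont F x" using dF has_derivative_continuous by blast
  qed
  have contPhi: "continuous_on S \<Phi>" unfolding \<Phi>_def
    by (intro continuous_on_Pair continuous_on_fst continuous_on_id contF)
  have gf: "\<Psi> (\<Phi> x) = x" if "x \<in> S" for x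
  proof -
    obtain s t where "x = (s, t)" by (cases x)
    then show ?thesis using inv that unfolding \<Psi>_def \<Phi>_def by auto
  qed
  have derPhi: "(\<Phi> has_derivative \<Phi>') (at (s0, t0))"
    unfolding \<Phi>_def \<Phi>'_def by (intro has_derivative_Pair has_derivative_fst[OF has_derivative_ident] dF[OF x0])
  have id: "\<Phi>' \<circ> \<Psi>' = id" unfolding \<Phi>'_def \<Psi>'_def using nz by (auto simp: fun_eq_iff field_simps)
  have derPsi: "(\<Psi> has_derivative \<Psi>') (at (\<Phi> (s0, t0)))"
    by (rule has_derivative_inverse_strong[OF S x0 contPhi gf derPhi id])
  have P0: "\<Phi> (s0, t0) = (s0, F (s0, t0))" unfolding \<Phi>_def by simp
  have "\<Psi> (\<Phi> (s0, t0)) = (s0, t0)" using gf[OF x0] .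
  then have dG': "(G has_derivative (\<lambda>h. Gs * fst h + Gt * snd h)) (at (\<Psi> (\<Phi> (s0, t0))))" using dG by simp
  have "((G \<circ> \<Psi>) has_derivative ((\<lambda>h. Gs * fst h + Gt * snd h) \<circ> \<Psi>')) (at (\<Phi> (s0, t0)))"
    by (rule diff_chain_at[OF derPsi dG'])
  moreover have "((\<lambda>h. Gs * fst h + Gt * snd h) \<circ> \<Psi>') =
      (\<lambda>h. (Gs - Gt * Fs s0 t0 / Ft s0 t0) * fst h + (Gt / Ft s0 t0) * snd h)"
    unfolding \<Psi>'_def using nz by (auto simp: fun_eq_iff field_simps)
  ultimately show ?thesis unfolding P0 by (simp add: \<Psi>_def comp_def)
qed

lemma main_lemma:
  fixes k l :: nat and \<gamma> \<delta> p :: "(nat \<Rightarrow> real) \<Rightarrow> real" and D :: "(nat \<Rightarrow> real) set" and z0 :: "nat \<Rightarrow> real"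
  defines "N \<equiv> k + l + 1" and "u \<equiv> k - 1" and "q \<equiv> pd k p"
  assumes k1: "k \<ge> 1" and l1: "l \<ge> 1"
    and DE: "D \<subseteq> EucSp N" and Dopen: "openin (top_of_set (EucSp N)) D"
    and pa: "real_analytic_on N p D"
    and eqa: "\<And>z. z \<in> D \<Longrightarrow> pd u p z * (Fop k l q z - \<delta> (mk4 (z k) (p z) (q z) (pd k q z)))
                 - pd u q z * (Fop k l p z - \<gamma> (mk4 (z k) (p z) (q z) (pd k q z))) = 0"
    and eqb: "\<And>z. z \<in> D \<Longrightarrow> pd u p z * pd (k + l) q z - pd u q z * pd (k + l) p z = 0"
    and nzc: "\<And>z. z \<in> D \<Longrightarrow> pd u p z \<noteq> 0"
    and hyp: "k = 1 \<or> (\<forall>z\<in>D. pd u p z * pd (k - 2) q z - pd (k - 2) p z * pd u q z = 0)"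
    and z0: "z0 \<in> D"
  shows "\<exists>W. openin (top_of_set (EucSp N)) W \<and> z0 \<in> W \<and> W \<subseteq> D \<and> (\<exists>\<alpha>. \<forall>z\<in>W. q z = \<alpha> (z k) (p z))"
proof -
  have uN: "u < N" and kN: "k < N" and uk: "u \<noteq> k" and klN: "k + l < N" and ku: "k = Suc u"
    using k1 unfolding N_def u_def by auto
  have qa: "real_analytic_on N q D" unfolding q_def by (rule real_analytic_pd[OF pa DE kN])
  have z0E: "z0 \<in> EucSp N" using z0 DE by auto
  have d1p: "((\<lambda>t. p (z(i := t))) has_real_derivative pd i p z) (at (z i))" if "z \<in> D" "i < N" for z i
  proof (cases "i = k")
    case True then show ?thesis using ra_deriv1[OF pa DE that uN] uk by simp
  next
    case False then show ?thesis using ra_deriv1[OF pa DE that kN] by simp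
  qed
  obtain \<epsilon> where \<epsilon>: "\<epsilon> > 0" "\<And>v. v \<in> EucSp N \<Longrightarrow> (\<forall>i<N. \<bar>v i - z0 i\<bar> < \<epsilon>) \<Longrightarrow> v \<in> D"
    using box_of_openin[OF Dopen z0] by blast
  define a where "a = z0 u - \<epsilon>/2"
  define b where "b = z0 u + \<epsilon>/2"
  have ab: "a < z0 u" "z0 u < b" "a < b" unfolding a_def b_def using \<epsilon> by auto
  have EucU: "v(i := t) \<in> EucSp N" if "v \<in> EucSp N" "i < N" for v i t
    using that unfolding EucSp_def by auto
  have inD: "v(u := t) \<in> D" if "v \<in> EucSp N" "\<forall>i<N. i \<noteq> u \<longrightarrow> \<bar>v i - z0 i\<bar> < \<epsilon>" "\<bar>t - z0 u\<bar> < \<epsilon>" for v t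
    by (rule \<epsilon>(2)) (use that uN EucU in auto)
  have lineder: "((\<lambda>t'. p (v(u := t'))) has_real_derivative pd u p (v(u := t))) (at t)"
    if "v \<in> EucSp N" "\<forall>i<N. i \<noteq> u \<longrightarrow> \<bar>v i - z0 i\<bar> < \<epsilon>" "\<bar>t - z0 u\<bar> < \<epsilon>" for v t
    using d1p[OF inD[OF that] uN] by simp
  have linecont: "continuous_on {a..b} (\<lambda>t. p (v(u := t)))"
    if "v \<in> EucSp N" "\<forall>i<N. i \<noteq> u \<longrightarrow> \<bar>v i - z0 i\<bar> < \<epsilon>" for v
  proof (rule DERIV_continuous_on)
    fix t assume "t \<in> {a..b}"
    then have "\<bar>t - z0 u\<bar> < \<epsilon>" unfolding a_def b_def using \<epsilon> by auto
    then show "((\<lambda>t. p (v(u := t))) has_real_derivative pd u p (v(u := t))) (at t within {a..b})"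
      using lineder[OF that] has_field_derivative_at_within by blast
  qed
  have lineinj: "t1 = t2"
    if v: "v \<in> EucSp N" "\<forall>i<N. i \<noteq> u \<longrightarrow> \<bar>v i - z0 i\<bar> < \<epsilon>"
      and t: "a \<le> t1" "t1 \<le> b" "a \<le> t2" "t2 \<le> b" "p (v(u := t1)) = p (v(u := t2))" for v t1 t2
  proof (rule ccontr)
    assume ne: "t1 \<noteq> t2"
    define lo where "lo = min t1 t2"
    define hi where "hi = max t1 t2"
    have lh: "lo < hi" "a \<le> lo" "hi \<le> b" using ne t unfolding lo_def hi_def by auto
    have eq: "p (v(u := lo)) = p (v(u := hi))" using t unfolding lo_def hi_def by (auto simp: min_def max_def)
    have "continuous_on {lo..hi} (\<lambda>t. p (v(u := t)))"
      by (rule continuous_on_subset[OF linecont[OF v]]) (use lh in auto)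
    moreover have "(\<lambda>t. p (v(u := t))) differentiable (at x)" if "lo < x" "x < hi" for x
    proof -
      have "\<bar>x - z0 u\<bar> < \<epsilon>" using that lh unfolding a_def b_def using \<epsilon> by auto
      then show ?thesis using lineder[OF v] unfolding real_differentiable_def by blast
    qed
    ultimately obtain \<xi> where \<xi>: "lo < \<xi>" "\<xi> < hi" "((\<lambda>t. p (v(u := t))) has_real_derivative 0) (at \<xi>)"
      using Rolle[OF lh(1) eq] by blast
    have x\<epsilon>: "\<bar>\<xi> - z0 u\<bar> < \<epsilon>" using \<xi> lh unfolding a_def b_def using \<epsilon> by auto
    have "pd u p (v(u := \<xi>)) = 0" using DERIV_unique[OF lineder[OF v x\<epsilon>] \<xi>(3)] .
    with nzc[OF inD[OF v x\<epsilon>]] show False by simp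
  qed
  define c0 where "c0 = p z0"
  define fa0 where "fa0 = p (z0(u := a))"
  define fb0 where "fb0 = p (z0(u := b))"
  have z0near: "\<forall>i<N. i \<noteq> u \<longrightarrow> \<bar>z0 i - z0 i\<bar> < \<epsilon>" using \<epsilon> by simp
  have injz0: "inj_on (\<lambda>t. p (z0(u := t))) {a..b}"
    by (intro inj_onI) (rule lineinj[OF z0E z0near]; auto)
  have mono0: "(fa0 < c0 \<and> c0 < fb0) \<or> (fb0 < c0 \<and> c0 < fa0)"
    using continuous_inj_imp_mono[OF ab(1) ab(2) linecont[OF z0E z0near] injz0]
    unfolding fa0_def fb0_def c0_def by simp
  define \<theta> where "\<theta> = min \<bar>fa0 - c0\<bar> \<bar>fb0 - c0\<bar> / 2"
  have \<theta>: "\<theta> > 0" "2*\<theta> \<le> \<bar>fa0 - c0\<bar>" "2*\<theta> \<le> \<bar>fb0 - c0\<bar>" using mono0 unfolding \<theta>_def by auto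
  have zaD: "z0(u := a) \<in> D" by (rule inD[OF z0E z0near]) (use \<epsilon> in \<open>simp add: a_def\<close>)
  have zbD: "z0(u := b) \<in> D" by (rule inD[OF z0E z0near]) (use \<epsilon> in \<open>simp add: b_def\<close>)
  obtain \<eta>1 where \<eta>1: "\<eta>1 > 0" "\<forall>w\<in>EucSp N. (\<forall>i<N. \<bar>w i - (z0(u := a)) i\<bar> < \<eta>1) \<longrightarrow> \<bar>p w - fa0\<bar> < \<theta>"
    using ra_cont[OF pa DE zaD \<theta>(1)] unfolding fa0_def by blast
  obtain \<eta>2 where \<eta>2: "\<eta>2 > 0" "\<forall>w\<in>EucSp N. (\<forall>i<N. \<bar>w i - (z0(u := b)) i\<bar> < \<eta>2) \<longrightarrow> \<bar>p w - fb0\<bar> < \<theta>"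
    using ra_cont[OF pa DE zbD \<theta>(1)] unfolding fb0_def by blast
  define \<eta> where "\<eta> = min \<epsilon> (min \<eta>1 \<eta>2)"
  have \<eta>: "\<eta> > 0" "\<eta> \<le> \<epsilon>" "\<eta> \<le> \<eta>1" "\<eta> \<le> \<eta>2" unfolding \<eta>_def using \<epsilon> \<eta>1 \<eta>2 by auto
  have near\<epsilon>: "\<forall>i<N. i \<noteq> u \<longrightarrow> \<bar>v i - z0 i\<bar> < \<epsilon>" if "\<forall>i<N. i \<noteq> u \<longrightarrow> \<bar>v i - z0 i\<bar> < \<eta>" for v
    using that \<eta> by force
  have nearA: "\<bar>p (v(u := a)) - fa0\<bar> < \<theta>" if "v \<in> EucSp N" "\<forall>i<N. i \<noteq> u \<longrightarrow> \<bar>v i - z0 i\<bar> < \<eta>" for v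
    using \<eta>1(2) EucU[OF that(1) uN] that(2) \<eta> \<eta>1(1) by force
  have nearB: "\<bar>p (v(u := b)) - fb0\<bar> < \<theta>" if "v \<in> EucSp N" "\<forall>i<N. i \<noteq> u \<longrightarrow> \<bar>v i - z0 i\<bar> < \<eta>" for v
    using \<eta>2(2) EucU[OF that(1) uN] that(2) \<eta> \<eta>2(1) by force
  define L where "L = (\<lambda>i. if i = u then ball c0 \<theta> else ball (z0 i) \<eta>)"
  define V where "V = {y \<in> EucSp N. \<forall>i<N. y i \<in> L i}"
  define g where "g = (\<lambda>y. THE t. a \<le> t \<and> t \<le> b \<and> p (y(u := t)) = y u)"
  define \<Psi> where "\<Psi> = (\<lambda>y. y(u := g y))"
  define Q where "Q = (\<lambda>y. q (\<Psi> y))"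
  define W where "W = {w \<in> EucSp N. (\<forall>i<N. i \<noteq> u \<longrightarrow> \<bar>w i - z0 i\<bar> < \<eta>) \<and> a < w u \<and> w u < b \<and> \<bar>p w - c0\<bar> < \<theta>}"
  have G1: "g (v(u := p (v(u := t)))) = t"
    if "v \<in> EucSp N" "\<forall>i<N. i \<noteq> u \<longrightarrow> \<bar>v i - z0 i\<bar> < \<eta>" "a \<le> t" "t \<le> b" for v t
    unfolding g_def
  proof (rule the_equality)
    show "a \<le> t \<and> t \<le> b \<and> p (v(u := p (v(u := t)), u := t)) = (v(u := p (v(u := t)))) u" using that by simp
    fix t' assume "a \<le> t' \<and> t' \<le> b \<and> p (v(u := p (v(u := t)), u := t')) = (v(u := p (v(u := t)))) u"
    then show "t' = t" using lineinj[OF that(1) near\<epsilon>[OF that(2)]] that by auto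
  qed
  have Vnear: "y \<in> EucSp N" "\<forall>i<N. i \<noteq> u \<longrightarrow> \<bar>y i - z0 i\<bar> < \<eta>" "\<bar>y u - c0\<bar> < \<theta>" if "y \<in> V" for y
    using that uN unfolding V_def L_def by (auto simp: dist_real_def abs_minus_commute)
  have F1: "a < g y \<and> g y < b \<and> p (y(u := g y)) = y u" if y: "y \<in> V" for y
  proof -
    note yn = Vnear[OF y]
    have fa: "\<bar>p (y(u := a)) - fa0\<bar> < \<theta>" by (rule nearA[OF yn(1,2)])
    have fb: "\<bar>p (y(u := b)) - fb0\<bar> < \<theta>" by (rule nearB[OF yn(1,2)])
    have "\<exists>t. a \<le> t \<and> t \<le> b \<and> p (y(u := t)) = y u"
    proof (cases "fa0 < c0 \<and> c0 < fb0")
      case True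
      then have "p (y(u := a)) \<le> y u" "y u \<le> p (y(u := b))" using fa fb yn(3) \<theta> by auto
      then show ?thesis using IVT'[of "\<lambda>t. p (y(u := t))" a "y u" b] ab linecont[OF yn(1) near\<epsilon>[OF yn(2)]] by auto
    next
      case False
      then have "fb0 < c0 \<and> c0 < fa0" using mono0 by auto
      then have "p (y(u := b)) \<le> y u" "y u \<le> p (y(u := a))" using fa fb yn(3) \<theta> by auto
      then show ?thesis using IVT2'[of "\<lambda>t. p (y(u := t))" b "y u" a] ab linecont[OF yn(1) near\<epsilon>[OF yn(2)]] by auto
    qed
    then obtain t where t: "a \<le> t" "t \<le> b" "p (y(u := t)) = y u" by blast
    have "y(u := p (y(u := t))) = y" using t by auto
    then have gt: "g y = t" using G1[OF yn(1,2) t(1,2)] by simp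
    have "t \<noteq> a" using t fa yn(3) \<theta> mono0 by auto
    moreover have "t \<noteq> b" using t fb yn(3) \<theta> mono0 by auto
    ultimately show ?thesis using t gt by auto
  qed
  have F2: "\<Psi> y \<in> W" "\<Psi> y = y(u := g y)" if y: "y \<in> V" for y
  proof -
    note yn = Vnear[OF y]
    show "\<Psi> y = y(u := g y)" unfolding \<Psi>_def ..
    show "\<Psi> y \<in> W" unfolding W_def \<Psi>_def using F1[OF y] yn EucU[OF yn(1) uN] by auto
  qed
  have F3: "w(u := p w) \<in> V" "\<Psi> (w(u := p w)) = w" if w: "w \<in> W" for w
  proof -
    have wn: "w \<in> EucSp N" "\<forall>i<N. i \<noteq> u \<longrightarrow> \<bar>w i - z0 i\<bar> < \<eta>" "a < w u" "w u < b" "\<bar>p w - c0\<bar> < \<theta>"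
      using w unfolding W_def by auto
    show "w(u := p w) \<in> V" unfolding V_def L_def using wn EucU[OF wn(1) uN]
      by (auto simp: dist_real_def abs_minus_commute)
    have "g (w(u := p (w(u := w u)))) = w u" by (rule G1[OF wn(1,2)]) (use wn in auto)
    then show "\<Psi> (w(u := p w)) = w" unfolding \<Psi>_def by simp
  qed
  have F4: "W \<subseteq> D"
  proof
    fix w assume "w \<in> W"
    then have wn: "w \<in> EucSp N" "\<forall>i<N. i \<noteq> u \<longrightarrow> \<bar>w i - z0 i\<bar> < \<eta>" "a < w u" "w u < b"
      unfolding W_def by auto
    have "w(u := w u) \<in> D" by (rule inD[OF wn(1) near\<epsilon>[OF wn(2)]]) (use wn in \<open>auto simp: a_def b_def\<close>)
    then show "w \<in> D" by simp
  qed
  have F5: "openin (top_of_set (EucSp N)) W"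
  proof -
    define B where "B = {w \<in> EucSp N. \<forall>i<N. w i \<in> (if i = u then {a<..<b} else ball (z0 i) \<eta>)}"
    define X where "X = {w \<in> D. \<bar>p w - c0\<bar> < \<theta>}"
    have "openin (top_of_set (EucSp N)) B" unfolding B_def by (rule box_openin) auto
    moreover have "openin (top_of_set (EucSp N)) X"
    proof (rule openin_by_boxes)
      show "X \<subseteq> EucSp N" unfolding X_def using DE by auto
      show "\<forall>w\<in>X. \<exists>d>0. \<forall>v\<in>EucSp N. (\<forall>i<N. \<bar>v i - w i\<bar> < d) \<longrightarrow> v \<in> X"
      proof
        fix w assume w: "w \<in> X"
        then have wD: "w \<in> D" and wl: "\<bar>p w - c0\<bar> < \<theta>" unfolding X_def by auto
        obtain d1 where d1: "d1 > 0" "\<forall>v\<in>EucSp N. (\<forall>i<N. \<bar>v i - w i\<bar> < d1) \<longrightarrow> v \<in> D"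
          using box_of_openin[OF Dopen wD] by blast
        obtain d2 where d2: "d2 > 0" "\<forall>v\<in>EucSp N. (\<forall>i<N. \<bar>v i - w i\<bar> < d2) \<longrightarrow> \<bar>p v - p w\<bar> < \<theta> - \<bar>p w - c0\<bar>"
          using ra_cont[OF pa DE wD, of "\<theta> - \<bar>p w - c0\<bar>"] wl by auto
        show "\<exists>d>0. \<forall>v\<in>EucSp N. (\<forall>i<N. \<bar>v i - w i\<bar> < d) \<longrightarrow> v \<in> X"
        proof (intro exI[of _ "min d1 d2"] conjI ballI impI)
          show "0 < min d1 d2" using d1 d2 by simp
          fix v assume v: "v \<in> EucSp N" "\<forall>i<N. \<bar>v i - w i\<bar> < min d1 d2"
          then have "v \<in> D" "\<bar>p v - p w\<bar> < \<theta> - \<bar>p w - c0\<bar>" using d1 d2 by auto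
          then show "v \<in> X" unfolding X_def by auto
        qed
      qed
    qed
    ultimately have "openin (top_of_set (EucSp N)) (B \<inter> X)" by blast
    moreover have "B \<inter> X = W"
    proof
      show "B \<inter> X \<subseteq> W" unfolding B_def X_def W_def using uN by (auto simp: dist_real_def abs_minus_commute)
      show "W \<subseteq> B \<inter> X" using F4 unfolding B_def X_def W_def by (auto simp: dist_real_def abs_minus_commute)
    qed
    ultimately show ?thesis by simp
  qed
  have Vin: "y(i := t) \<in> V" if "y \<in> V" "i < N" "t \<in> L i" for y i t
    using that EucU unfolding V_def by auto
  have Lopen: "open (L i)" for i unfolding L_def by auto
  have VL: "y i \<in> L i" if "y \<in> V" "i < N" for y i using that unfolding V_def by auto
  have DQ: "((\<lambda>s. Q (y(m := s))) has_real_derivative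
        (pd m q (\<Psi> y) - pd u q (\<Psi> y) * pd m p (\<Psi> y) / pd u p (\<Psi> y))) (at (y m))"
     "((\<lambda>c. Q (y(u := c))) has_real_derivative (pd u q (\<Psi> y) / pd u p (\<Psi> y))) (at (y u))"
     if y: "y \<in> V" and m: "m < N" "m \<noteq> u" for y m
  proof -
    define z where "z = \<Psi> y"
    have zW: "z \<in> W" and zdef: "z = y(u := g y)" using F2[OF y] unfolding z_def by auto
    have zD: "z \<in> D" using F4 zW by auto
    note yn = Vnear[OF y]
    define S where "S = ball (z0 m) \<eta> \<times> {a<..<b}"
    have Sopen: "open S" unfolding S_def by (intro open_Times) auto
    have x0: "(y m, g y) \<in> S" unfolding S_def using yn m F1[OF y] by (auto simp: dist_real_def abs_minus_commute)
    have zst: "z(m := s, u := t) = (y(m := s))(u := t)" for s t unfolding zdef by (auto simp: fun_eq_iff)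
    have ymn: "y(m := s) \<in> EucSp N" "\<forall>i<N. i \<noteq> u \<longrightarrow> \<bar>(y(m := s)) i - z0 i\<bar> < \<eta>" if "s \<in> ball (z0 m) \<eta>" for s
      using that yn EucU[OF yn(1) m(1)] by (auto simp: dist_real_def abs_minus_commute)
    have ptD: "z(m := s, u := t) \<in> D" if "(s, t) \<in> S" for s t
    proof -
      have "s \<in> ball (z0 m) \<eta>" "a < t" "t < b" using that unfolding S_def by auto
      then have st1: "s \<in> ball (z0 m) \<eta>" and t\<epsilon>: "\<bar>t - z0 u\<bar> < \<epsilon>" unfolding a_def b_def by auto
      show ?thesis unfolding zst by (rule inD[OF ymn(1)[OF st1] near\<epsilon>[OF ymn(2)[OF st1]] t\<epsilon>])
    qed
    define F where "F = (\<lambda>x::real\<times>real. p (z(m := fst x, u := snd x)))"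
    define G where "G = (\<lambda>x::real\<times>real. q (z(m := fst x, u := snd x)))"
    have upd2: "(z(m := s, u := t))(m := s', u := t') = z(m := s', u := t')" for s t s' t'
      by (auto simp: fun_eq_iff)
    have dF: "(F has_derivative (\<lambda>h. pd m p (z(m := s, u := t)) * fst h + pd u p (z(m := s, u := t)) * snd h)) (at (s, t))"
      if "(s, t) \<in> S" for s t
      using ra_deriv2[OF pa DE ptD[OF that] m(1) uN m(2)] m unfolding F_def upd2 by simp
    have zfix: "z(m := y m, u := g y) = z" using zdef m by (auto simp: fun_eq_iff)
    have dG: "(G has_derivative (\<lambda>h. pd m q z * fst h + pd u q z * snd h)) (at (y m, g y))"
    proof -
      have "z m = y m" "z u = g y" using zdef m by auto
      then show ?thesis using ra_deriv2[OF qa DE zD m(1) uN m(2)] unfolding G_def by simp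
    qed
    have nz: "pd u p (z(m := y m, u := g y)) \<noteq> 0" using nzc[OF zD] zfix by simp
    have inv: "g (y(m := s, u := F (s, t))) = t" if "(s, t) \<in> S" for s t
    proof -
      have st: "s \<in> ball (z0 m) \<eta>" "a \<le> t" "t \<le> b" using that unfolding S_def by auto
      have "g ((y(m := s))(u := p ((y(m := s))(u := t)))) = t" by (rule G1[OF ymn[OF st(1)] st(2,3)])
      then show ?thesis unfolding F_def zst by simp
    qed
    have L2: "((\<lambda>x. G (fst x, g (y(m := fst x, u := snd x)))) has_derivative
           (\<lambda>h. (pd m q z - pd u q z * pd m p (z(m := y m, u := g y)) / pd u p (z(m := y m, u := g y))) * fst h
              + (pd u q z / pd u p (z(m := y m, u := g y))) * snd h)) (at (y m, F (y m, g y)))"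
      by (rule L2D[OF Sopen x0 dF dG nz, where \<phi> = "\<lambda>s c. g (y(m := s, u := c))"]) (use inv in auto)
    have Fy: "F (y m, g y) = y u" unfolding F_def using zfix F2[OF y] F1[OF y] zdef by simp
    have H: "G (s', g (y(m := s', u := c))) = Q (y(m := s', u := c))" for s' c
      unfolding G_def Q_def \<Psi>_def zdef by (simp add: fun_upd_twist[OF m(2)])
    have L3: "((\<lambda>x. Q (y(m := fst x, u := snd x))) has_derivative
           (\<lambda>h. (pd m q z - pd u q z * pd m p z / pd u p z) * fst h + (pd u q z / pd u p z) * snd h)) (at (y m, y u))"
      using L2 unfolding H Fy zfix .
    have e1: "y(m := s, u := y u) = y(m := s)" for s using m by (auto simp: fun_eq_iff)
    have e2: "y(m := y m, u := c) = y(u := c)" for c by (auto simp: fun_eq_iff)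
    show "((\<lambda>s. Q (y(m := s))) has_real_derivative
        (pd m q (\<Psi> y) - pd u q (\<Psi> y) * pd m p (\<Psi> y) / pd u p (\<Psi> y))) (at (y m))"
      using d2to1(1)[OF L3] by (simp add: e1 z_def)
    show "((\<lambda>c. Q (y(u := c))) has_real_derivative (pd u q (\<Psi> y) / pd u p (\<Psi> y))) (at (y u))"
      using d2to1(2)[OF L3] by (simp add: e2 z_def)
  qed
  have pdQm: "pd m Q y = pd m q (\<Psi> y) - pd u q (\<Psi> y) * pd m p (\<Psi> y) / pd u p (\<Psi> y)"
    if "y \<in> V" "m < N" "m \<noteq> u" for y m
    using DERIV_imp_deriv[OF DQ(1)[OF that]] pd_def[of m Q y] by simp
  have pdQu: "pd u Q y = pd u q (\<Psi> y) / pd u p (\<Psi> y)" if "y \<in> V" for y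
    using DERIV_imp_deriv[OF DQ(2)[OF that kN uk[symmetric]]] pd_def[of u Q y] by simp
  have DQm: "((\<lambda>s. Q (y(m := s))) has_real_derivative pd m Q y) (at (y m))" if "y \<in> V" "m < N" "m \<noteq> u" for y m
    using DQ(1)[OF that] pdQm[OF that] by simp
  define wQ where "wQ = (\<lambda>y. mk4 (y k) (y u) (Q y) (pd k Q y + pd u Q y * Q y))"
  have E: "Fop k l Q y - \<delta> (wQ y) + pd u Q y * \<gamma> (wQ y) = 0" if y: "y \<in> V" for y
  proof -
    define z where "z = \<Psi> y"
    have zdef: "z = y(u := g y)" using F2[OF y] unfolding z_def by auto
    have zD: "z \<in> D" using F4 F2[OF y] unfolding z_def by auto
    define P1 where "P1 = pd u p z"
    define Pq where "Pq = pd u q z"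
    have P1: "P1 \<noteq> 0" unfolding P1_def by (rule nzc[OF zD])
    have pQ: "pd i Q y = pd i q z - Pq * pd i p z / P1" if "i < N" "i \<noteq> u" for i
      using pdQm[OF y that] unfolding z_def P1_def Pq_def .
    have t1: "y (i + 1) * pd i Q y = z (i + 1) * pd i q z - Pq / P1 * (z (i + 1) * pd i p z)" if i: "i < k - 1" for i
    proof (cases "i + 1 = u")
      case False
      then have yz: "y (i + 1) = z (i + 1)" unfolding zdef by simp
      have e: "pd i Q y = pd i q z - Pq * pd i p z / P1" using pQ[of i] i uN unfolding u_def by simp
      show ?thesis unfolding yz e by (simp add: field_simps)
    next
      case True
      then have k2: "k \<noteq> 1" "i = k - 2" using i unfolding u_def by auto
      then have "P1 * pd i q z - pd i p z * Pq = 0" using hyp zD unfolding P1_def Pq_def by auto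
      then have "pd i q z - Pq * pd i p z / P1 = 0" using P1 by (simp add: field_simps)
      moreover have "pd i Q y = pd i q z - Pq * pd i p z / P1" using pQ[of i] i uN unfolding u_def by simp
      ultimately show ?thesis by (simp add: field_simps)
    qed
    have t2: "y (k + 2 + j) * pd (k + 1 + j) Q y = z (k + 2 + j) * pd (k + 1 + j) q z - Pq / P1 * (z (k + 2 + j) * pd (k + 1 + j) p z)"
      if j: "j < l - 1" for j
    proof -
      have "k + 2 + j \<noteq> u" unfolding u_def by simp
      then have yz: "y (k + 2 + j) = z (k + 2 + j)" unfolding zdef by simp
      have "k + 1 + j < N" "k + 1 + j \<noteq> u" using j unfolding N_def u_def by auto
      then have e: "pd (k + 1 + j) Q y = pd (k + 1 + j) q z - Pq * pd (k + 1 + j) p z / P1" using pQ by blast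
      show ?thesis unfolding yz e by (simp add: field_simps)
    qed
    have s1: "(\<Sum>i<k - 1. y (i + 1) * pd i Q y) = (\<Sum>i<k - 1. z (i + 1) * pd i q z) - Pq / P1 * (\<Sum>i<k - 1. z (i + 1) * pd i p z)"
    proof -
      have "(\<Sum>i<k - 1. y (i + 1) * pd i Q y) = (\<Sum>i<k - 1. z (i + 1) * pd i q z - Pq / P1 * (z (i + 1) * pd i p z))"
        by (rule sum.cong) (use t1 in auto)
      then show ?thesis by (simp add: sum_subtractf sum_distrib_left)
    qed
    have s2: "(\<Sum>j<l - 1. y (k + 2 + j) * pd (k + 1 + j) Q y) = (\<Sum>j<l - 1. z (k + 2 + j) * pd (k + 1 + j) q z) - Pq / P1 * (\<Sum>j<l - 1. z (k + 2 + j) * pd (k + 1 + j) p z)"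
    proof -
      have "(\<Sum>j<l - 1. y (k + 2 + j) * pd (k + 1 + j) Q y) = (\<Sum>j<l - 1. z (k + 2 + j) * pd (k + 1 + j) q z - Pq / P1 * (z (k + 2 + j) * pd (k + 1 + j) p z))"
        by (rule sum.cong) (use t2 in auto)
      then show ?thesis by (simp add: sum_subtractf sum_distrib_left)
    qed
    have FopQ: "Fop k l Q y = Fop k l q z - Pq / P1 * Fop k l p z"
      unfolding Fop_def s1 s2 by (simp add: algebra_simps)
    have wz: "mk4 (z k) (p z) (q z) (pd k q z) = wQ y"
    proof -
      have "z k = y k" unfolding zdef using uk by simp
      moreover have "p z = y u" using F1[OF y] unfolding zdef by simp
      moreover have "q z = Q y" unfolding Q_def z_def ..
      moreover have "pd k q z = pd k Q y + pd u Q y * Q y"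
      proof -
        have "pd k p z = Q y" unfolding Q_def z_def q_def ..
        then have e1: "pd k Q y = pd k q z - Pq * Q y / P1" using pQ[OF kN uk[symmetric]] by simp
        have e2: "pd u Q y = Pq / P1" using pdQu[OF y] unfolding z_def P1_def Pq_def .
        show ?thesis unfolding e1 e2 using P1 by (simp add: field_simps)
      qed
      ultimately show ?thesis unfolding wQ_def by simp
    qed
    have a: "P1 * (Fop k l q z - \<delta> (wQ y)) - Pq * (Fop k l p z - \<gamma> (wQ y)) = 0"
      using eqa[OF zD] unfolding wz P1_def Pq_def .
    have e2: "pd u Q y = Pq / P1" using pdQu[OF y] unfolding z_def P1_def Pq_def .
    have "Fop k l q z - Pq / P1 * Fop k l p z - \<delta> (wQ y) + Pq / P1 * \<gamma> (wQ y)
        = (P1 * (Fop k l q z - \<delta> (wQ y)) - Pq * (Fop k l p z - \<gamma> (wQ y))) / P1"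
      using P1 by (simp add: field_simps)
    then show ?thesis unfolding FopQ e2 a by simp
  qed
  define indep where "indep = (\<lambda>m. \<forall>y\<in>V. \<forall>t\<in>L m. Q (y(m := t)) = Q y)"
  have I1: "indep m" if m: "m < N" "m \<noteq> u" and z: "\<forall>y\<in>V. pd m Q y = 0" for m
    unfolding indep_def
  proof (intro ballI)
    fix y t assume y: "y \<in> V" and t: "t \<in> L m"
    have Lm: "L m = ball (z0 m) \<eta>" unfolding L_def using m by simp
    have "\<exists>c. \<forall>x\<in>L m. Q (y(m := x)) = c"
    proof (rule has_field_derivative_zero_constant)
      show "convex (L m)" unfolding Lm by simp
      fix x assume x: "x \<in> L m"
      have yx: "y(m := x) \<in> V" by (rule Vin[OF y m(1) x])
      have "((\<lambda>s. Q ((y(m := x))(m := s))) has_real_derivative pd m Q (y(m := x))) (at ((y(m := x)) m))"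
        by (rule DQm[OF yx m])
      then have "((\<lambda>s. Q (y(m := s))) has_real_derivative 0) (at x)" using z yx by simp
      then show "((\<lambda>s. Q (y(m := s))) has_real_derivative 0) (at x within L m)"
        by (rule has_field_derivative_at_within)
    qed
    then obtain c where c: "\<forall>x\<in>L m. Q (y(m := x)) = c" by blast
    have "Q (y(m := y m)) = c" using c VL[OF y m(1)] by blast
    then show "Q (y(m := t)) = Q y" using c t by simp
  qed
  have I2: "pd j Q (y(m := t)) = pd j Q y"
    if ind: "indep m" and y: "y \<in> V" and t: "t \<in> L m" and m: "m < N" and j: "j < N" "j \<noteq> m" for m y t j
  proof -
    have ev: "eventually (\<lambda>s. Q ((y(m := t))(j := s)) = Q (y(j := s))) (nhds (y j))"
    proof -
      have "eventually (\<lambda>s. s \<in> L j) (nhds (y j))" by (rule eventually_nhds_in_open[OF Lopen VL[OF y j(1)]])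
      then show ?thesis
      proof (rule eventually_mono)
        fix s assume "s \<in> L j"
        then have yj: "y(j := s) \<in> V" by (rule Vin[OF y j(1)])
        have "(y(m := t))(j := s) = (y(j := s))(m := t)" using j by (auto simp: fun_eq_iff)
        then show "Q ((y(m := t))(j := s)) = Q (y(j := s))" using ind yj t unfolding indep_def by simp
      qed
    qed
    have "pd j Q (y(m := t)) = deriv (\<lambda>s. Q ((y(m := t))(j := s))) (y j)" unfolding pd_def using j by simp
    also have "\<dots> = deriv (\<lambda>s. Q (y(j := s))) (y j)" by (rule deriv_cong_ev[OF ev refl])
    also have "\<dots> = pd j Q y" unfolding pd_def ..
    finally show ?thesis .
  qed
  have I3: "pd m Q y = 0" if ind: "indep m" and y: "y \<in> V" and m: "m < N" for m y
  proof -
    have ev: "eventually (\<lambda>s. Q (y(m := s)) = Q y) (nhds (y m))"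
    proof -
      have "eventually (\<lambda>s. s \<in> L m) (nhds (y m))" by (rule eventually_nhds_in_open[OF Lopen VL[OF y m]])
      then show ?thesis by (rule eventually_mono) (use ind y in \<open>auto simp: indep_def\<close>)
    qed
    have "pd m Q y = deriv (\<lambda>s. Q (y(m := s))) (y m)" unfolding pd_def ..
    also have "\<dots> = deriv (\<lambda>s. Q y) (y m)" by (rule deriv_cong_ev[OF ev refl])
    finally show ?thesis by simp
  qed
  have Dsc: "\<forall>y\<in>V. pd (m - 1) Q y = 0"
    if ind: "indep m" and mr: "(1 \<le> m \<and> m \<le> k - 2) \<or> (k + 2 \<le> m \<and> m \<le> k + l)" for m
  proof
    fix y assume y: "y \<in> V"
    have mN: "m < N" "m \<noteq> u" "m \<noteq> k" using mr k1 unfolding N_def u_def by auto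
    have Lm: "L m = ball (z0 m) \<eta>" unfolding L_def using mN by simp
    define t where "t = (if y m = z0 m then z0 m + \<eta>/2 else z0 m)"
    have tL: "t \<in> L m" unfolding Lm t_def using \<eta> by (auto simp: dist_real_def)
    have tne: "t \<noteq> y m" unfolding t_def using \<eta> by auto
    define y' where "y' = y(m := t)"
    have y'V: "y' \<in> V" unfolding y'_def by (rule Vin[OF y mN(1) tL])
    have Qeq: "Q y' = Q y" using ind y tL unfolding indep_def y'_def by auto
    have pdeq: "pd i Q y' = pd i Q y" if "i < N" for i
    proof (cases "i = m")
      case True then show ?thesis using I3[OF ind y'V mN(1)] I3[OF ind y mN(1)] by simp
    next
      case False then show ?thesis unfolding y'_def by (rule I2[OF ind y tL mN(1) that])
    qed
    have wEq: "wQ y' = wQ y" unfolding wQ_def using Qeq pdeq[OF kN] pdeq[OF uN] mN by (simp add: y'_def)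
    have FopEq: "Fop k l Q y' = Fop k l Q y" using E[OF y'V] E[OF y] wEq pdeq[OF uN] by simp
    have y'v: "y' n = y n + (if n = m then t - y m else 0)" for n unfolding y'_def by simp
    have iN: "i < N" if "i < k - 1" for i using that kN by simp
    have jN: "k + 1 + j < N" if "j < l - 1" for j using that unfolding N_def by simp
    have diff: "Fop k l Q y' = Fop k l Q y + (t - y m) * pd (m - 1) Q y"
    proof (cases "1 \<le> m \<and> m \<le> k - 2")
      case True
      have A: "(\<Sum>i<k - 1. y' (i + 1) * pd i Q y') = (\<Sum>i<k - 1. y (i + 1) * pd i Q y) + (\<Sum>i<k - 1. if i = m - 1 then (t - y m) * pd i Q y else 0)"
      proof -
        have "(\<Sum>i<k - 1. y' (i + 1) * pd i Q y') = (\<Sum>i<k - 1. y (i + 1) * pd i Q y + (if i = m - 1 then (t - y m) * pd i Q y else 0))"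
        proof (rule sum.cong)
          fix i assume "i \<in> {..<k - 1}"
          then show "y' (i + 1) * pd i Q y' = y (i + 1) * pd i Q y + (if i = m - 1 then (t - y m) * pd i Q y else 0)"
            using pdeq[OF iN] True by (auto simp: y'v algebra_simps)
        qed simp
        then show ?thesis by (simp add: sum.distrib)
      qed
      have A2: "(\<Sum>i<k - 1. if i = m - 1 then (t - y m) * pd i Q y else 0) = (t - y m) * pd (m - 1) Q y"
      proof -
        have "m - 1 < k - 1" using True by auto
        then show ?thesis by (simp add: sum.delta)
      qed
      have B: "(\<Sum>j<l - 1. y' (k + 2 + j) * pd (k + 1 + j) Q y') = (\<Sum>j<l - 1. y (k + 2 + j) * pd (k + 1 + j) Q y)"
      proof (rule sum.cong)
        fix j assume "j \<in> {..<l - 1}"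
        then show "y' (k + 2 + j) * pd (k + 1 + j) Q y' = y (k + 2 + j) * pd (k + 1 + j) Q y"
          using pdeq[OF jN] True by (auto simp: y'v)
      qed simp
      show ?thesis unfolding Fop_def A A2 B by simp
    next
      case False
      then have mr2: "k + 2 \<le> m" "m \<le> k + l" using mr by auto
      have A: "(\<Sum>i<k - 1. y' (i + 1) * pd i Q y') = (\<Sum>i<k - 1. y (i + 1) * pd i Q y)"
      proof (rule sum.cong)
        fix i assume "i \<in> {..<k - 1}"
        then show "y' (i + 1) * pd i Q y' = y (i + 1) * pd i Q y"
          using pdeq[OF iN] mr2 by (auto simp: y'v)
      qed simp
      have B: "(\<Sum>j<l - 1. y' (k + 2 + j) * pd (k + 1 + j) Q y') = (\<Sum>j<l - 1. y (k + 2 + j) * pd (k + 1 + j) Q y) + (\<Sum>j<l - 1. if j = m - k - 2 then (t - y m) * pd (k + 1 + j) Q y else 0)"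
      proof -
        have "(\<Sum>j<l - 1. y' (k + 2 + j) * pd (k + 1 + j) Q y') = (\<Sum>j<l - 1. y (k + 2 + j) * pd (k + 1 + j) Q y + (if j = m - k - 2 then (t - y m) * pd (k + 1 + j) Q y else 0))"
        proof (rule sum.cong)
          fix j assume "j \<in> {..<l - 1}"
          then show "y' (k + 2 + j) * pd (k + 1 + j) Q y' = y (k + 2 + j) * pd (k + 1 + j) Q y + (if j = m - k - 2 then (t - y m) * pd (k + 1 + j) Q y else 0)"
            using pdeq[OF jN] mr2 by (auto simp: y'v algebra_simps)
        qed simp
        then show ?thesis by (simp add: sum.distrib)
      qed
      have B2: "(\<Sum>j<l - 1. if j = m - k - 2 then (t - y m) * pd (k + 1 + j) Q y else 0) = (t - y m) * pd (m - 1) Q y"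
      proof -
        have lt: "m - k - 2 < l - 1" and e: "k + 1 + (m - k - 2) = m - 1" using mr2 by auto
        have "(\<Sum>j<l - 1. if j = m - k - 2 then (t - y m) * pd (k + 1 + j) Q y else 0)
            = (if m - k - 2 \<in> {..<l - 1} then (t - y m) * pd (k + 1 + (m - k - 2)) Q y else 0)"
          by (rule sum.delta) simp
        also have "\<dots> = (t - y m) * pd (k + 1 + (m - k - 2)) Q y" using lt by (simp only: lessThan_iff if_True)
        also have "\<dots> = (t - y m) * pd (m - 1) Q y" by (simp only: e)
        finally show ?thesis .
      qed
      show ?thesis unfolding Fop_def A B B2 by simp
    qed
    have "(t - y m) * pd (m - 1) Q y = 0" using diff FopEq by simp
    then show "pd (m - 1) Q y = 0" using tne by simp
  qed
  have ind_top: "indep (k + l)"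
  proof (rule I1)
    show "k + l < N" "k + l \<noteq> u" using klN k1 unfolding u_def by auto
    show "\<forall>y\<in>V. pd (k + l) Q y = 0"
    proof
      fix y assume y: "y \<in> V"
      have zD: "\<Psi> y \<in> D" using F4 F2[OF y] by auto
      have "pd (k + l) Q y = pd (k + l) q (\<Psi> y) - pd u q (\<Psi> y) * pd (k + l) p (\<Psi> y) / pd u p (\<Psi> y)"
        by (rule pdQm[OF y]) (use klN k1 in \<open>auto simp: u_def\<close>)
      also have "\<dots> = (pd u p (\<Psi> y) * pd (k + l) q (\<Psi> y) - pd u q (\<Psi> y) * pd (k + l) p (\<Psi> y)) / pd u p (\<Psi> y)"
        using nzc[OF zD] by (simp add: field_simps)
      also have "\<dots> = 0" using eqb[OF zD] by simp
      finally show "pd (k + l) Q y = 0" .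
    qed
  qed
  have chainv: "indep (k + l - d)" if "d \<le> l - 1" for d
    using that
  proof (induction d)
    case 0 then show ?case using ind_top by simp
  next
    case (Suc d)
    then have ih: "indep (k + l - d)" by simp
    have "\<forall>y\<in>V. pd (k + l - d - 1) Q y = 0" by (rule Dsc[OF ih]) (use Suc.prems in auto)
    moreover have "k + l - d - 1 = k + l - Suc d" by simp
    ultimately have z: "\<forall>y\<in>V. pd (k + l - Suc d) Q y = 0" by simp
    show ?case by (rule I1[OF _ _ z]) (use Suc.prems klN in \<open>auto simp: u_def\<close>)
  qed
  have chainu: "indep (k - 2 - d)" if k2: "k \<noteq> 1" and "d \<le> k - 2" for d
    using that(2)
  proof (induction d)
    case 0
    show ?case
    proof (rule I1)
      show "k - 2 - 0 < N" "k - 2 - 0 \<noteq> u" using k2 k1 kN unfolding u_def by auto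
      show "\<forall>y\<in>V. pd (k - 2 - 0) Q y = 0"
      proof
        fix y assume y: "y \<in> V"
        have zD: "\<Psi> y \<in> D" using F4 F2[OF y] by auto
        have "pd (k - 2) Q y = pd (k - 2) q (\<Psi> y) - pd u q (\<Psi> y) * pd (k - 2) p (\<Psi> y) / pd u p (\<Psi> y)"
          by (rule pdQm[OF y]) (use k2 k1 kN in \<open>auto simp: u_def\<close>)
        also have "\<dots> = (pd u p (\<Psi> y) * pd (k - 2) q (\<Psi> y) - pd (k - 2) p (\<Psi> y) * pd u q (\<Psi> y)) / pd u p (\<Psi> y)"
          using nzc[OF zD] by (simp add: field_simps)
        also have "\<dots> = 0" using hyp k2 zD by simp
        finally show "pd (k - 2 - 0) Q y = 0" by simp
      qed
    qed
  next
    case (Suc d)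
    then have ih: "indep (k - 2 - d)" by simp
    have "\<forall>y\<in>V. pd (k - 2 - d - 1) Q y = 0" by (rule Dsc[OF ih]) (use Suc.prems in auto)
    moreover have "k - 2 - d - 1 = k - 2 - Suc d" by simp
    ultimately have z: "\<forall>y\<in>V. pd (k - 2 - Suc d) Q y = 0" by simp
    show ?case by (rule I1[OF _ _ z]) (use Suc.prems kN k1 in \<open>auto simp: u_def\<close>)
  qed
  have allind: "indep m" if m: "m < N" "m \<noteq> u" "m \<noteq> k" for m
  proof (cases "m < k")
    case True
    then have k2: "k \<noteq> 1" "m \<le> k - 2" using m unfolding u_def by auto
    then have "indep (k - 2 - (k - 2 - m))" by (intro chainu) auto
    moreover have "k - 2 - (k - 2 - m) = m" using k2 by auto
    ultimately show ?thesis by simp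
  next
    case False
    then have "k + 1 \<le> m" "m \<le> k + l" using m unfolding N_def by auto
    then have "indep (k + l - (k + l - m))" by (intro chainv) auto
    moreover have "k + l - (k + l - m) = m" using \<open>m \<le> k + l\<close> by auto
    ultimately show ?thesis by simp
  qed
  define \<alpha> where "\<alpha> = (\<lambda>x c. Q (\<lambda>i. if i = u then c else if i = k then x else z0 i))"
  have reset: "Q y = \<alpha> (y k) (y u)" if y: "y \<in> V" for y
  proof -
    define ys where "ys = (\<lambda>n i. if i < n \<and> i \<noteq> u \<and> i \<noteq> k then z0 i else y i)"
    have "ys n \<in> V \<and> Q (ys n) = Q y" if "n \<le> N" for n
      using that
    proof (induction n)
      case 0 then show ?case using y unfolding ys_def by simp
    next
      case (Suc n)
      then have ih: "ys n \<in> V" "Q (ys n) = Q y" by auto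
      show ?case
      proof (cases "n = u \<or> n = k")
        case True
        then have "ys (Suc n) = ys n" unfolding ys_def by (auto simp: fun_eq_iff less_Suc_eq)
        then show ?thesis using ih by simp
      next
        case False
        then have e: "ys (Suc n) = (ys n)(n := z0 n)" unfolding ys_def by (auto simp: fun_eq_iff less_Suc_eq)
        have nN: "n < N" using Suc.prems by simp
        have zL: "z0 n \<in> L n" unfolding L_def using False \<eta> by simp
        have "(ys n)(n := z0 n) \<in> V" by (rule Vin[OF ih(1) nN zL])
        moreover have "Q ((ys n)(n := z0 n)) = Q (ys n)" using allind[OF nN] False ih(1) zL unfolding indep_def by auto
        moreover note ih(2)
        ultimately show ?thesis unfolding e by argo
      qed
    qed
    then have "Q (ys N) = Q y" by simp
    moreover have "ys N = (\<lambda>i. if i = u then y u else if i = k then y k else z0 i)"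
    proof
      fix i
      show "ys N i = (if i = u then y u else if i = k then y k else z0 i)"
      proof (cases "i < N")
        case True then show ?thesis unfolding ys_def by auto
      next
        case False
        then have "y i = 0" "z0 i = 0" using y z0E unfolding V_def EucSp_def by auto
        then show ?thesis unfolding ys_def using False uN kN by auto
      qed
    qed
    ultimately show ?thesis unfolding \<alpha>_def by simp
  qed
  show ?thesis
  proof (intro exI[of _ W] conjI F5)
    show "z0 \<in> W" unfolding W_def using z0E ab \<theta> \<eta> by (auto simp: c0_def)
    show "W \<subseteq> D" by (rule F4)
    show "\<exists>\<alpha>. \<forall>z\<in>W. q z = \<alpha> (z k) (p z)"
    proof (intro exI[of _ \<alpha>] ballI)
      fix w assume w: "w \<in> W"
      have "Q (w(u := p w)) = q w" unfolding Q_def using F3(2)[OF w] by simp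
      moreover have "Q (w(u := p w)) = \<alpha> (w k) (p w)" using reset[OF F3(1)[OF w]] uk by simp
      ultimately show "q w = \<alpha> (w k) (p w)" by simp
    qed
  qed
qed

theorem lemma3p10:
  fixes k l :: nat
    and \<gamma> \<delta> :: "(nat \<Rightarrow> real) \<Rightarrow> real"
    and \<Omega> :: "(nat \<Rightarrow> real) set"
    and p :: "(nat \<Rightarrow> real) \<Rightarrow> real"
    and D :: "(nat \<Rightarrow> real) set"
  assumes "k \<ge> 1" and "l \<ge> 1"
    and "\<Omega> \<subseteq> EucSp 4" and "openin (top_of_set (EucSp 4)) \<Omega>" and "connected \<Omega>"
    and "real_analytic_on 4 \<gamma> \<Omega>" and "real_analytic_on 4 \<delta> \<Omega>"
    and "\<forall>w\<in>\<Omega>. pd 3 \<gamma> w \<noteq> 0"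
    and "D \<subseteq> EucSp (k + l + 1)" and "openin (top_of_set (EucSp (k + l + 1))) D"
    and "connected D"
    and "is_solution k l \<gamma> \<delta> \<Omega> p D"
    and "k = 1 \<or> (\<forall>z\<in>D. pd (k - 1) p z * pd (k - 2) (pd k p) z
                          - pd (k - 2) p z * pd (k - 1) (pd k p) z = 0)"
  shows "\<forall>z0\<in>D. pd (k - 1) p z0 \<noteq> 0 \<longrightarrow>
           (\<exists>W. openin (top_of_set (EucSp (k + l + 1))) W \<and> z0 \<in> W \<and> W \<subseteq> D \<and>
              (\<exists>\<alpha> :: real \<Rightarrow> real \<Rightarrow> real. \<forall>z\<in>W. pd k p z = \<alpha> (z k) (p z)))"
proof (intro ballI impI)
  fix z0 assume z0: "z0 \<in> D" and "pd (k - 1) p z0 \<noteq> 0"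
  have sol: "real_analytic_on (k + l + 1) p D"
    "\<And>z. z \<in> D \<Longrightarrow> pd (k - 1) p z * (Fop k l (pd k p) z - \<delta> (mk4 (z k) (p z) (pd k p z) (pd k (pd k p) z)))
          - pd (k - 1) (pd k p) z * (Fop k l p z - \<gamma> (mk4 (z k) (p z) (pd k p z) (pd k (pd k p) z))) = 0"
    "\<And>z. z \<in> D \<Longrightarrow> pd (k - 1) p z * pd (k + l) (pd k p) z - pd (k - 1) (pd k p) z * pd (k + l) p z = 0"
    "\<And>z. z \<in> D \<Longrightarrow> pd (k - 1) p z \<noteq> 0"
    using assms(12) unfolding is_solution_def Let_def by auto
  show "\<exists>W. openin (top_of_set (EucSp (k + l + 1))) W \<and> z0 \<in> W \<and> W \<subseteq> D \<and>
              (\<exists>\<alpha> :: real \<Rightarrow> real \<Rightarrow> real. \<forall>z\<in>W. pd k p z = \<alpha> (z k) (p z))"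
    by (rule main_lemma[OF assms(1,2,9,10) sol(1) sol(2) sol(3) sol(4) assms(13) z0])
qed

end
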